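(* If $L$ is an oriented classical link, then its forbidden matrix $\mathcal{FM}(L)$ is symmetric.
   Context: An oriented (classical or virtual) link with $n$ components is represented by a signed Gauss diagram: $n$ oriented circles, one per component, with arrows from over-crossing point to under-crossing point, each arrow carrying the sign $\pm1$ of its crossing. A classical link is one representable by a planar link diagram. The forbidden moves are: interchange two adjacent arrowheads, or two adjacent arrow tails, on a circle. Using forbidden and Reidemeister moves, a Gauss diagram can be reduced to one with no arrow having both endpoints on the same circle and in which, for each ordered pair $(j,k)$ of distinct circles, all arrows from circle $j$ to circle $k$ have the same sign. The forbidden quiver $\mathcal{FQ}(L)$ is obtained by shrinking each circle of this reduced diagram to a vertex; $m$ parallel arrows of sign $\varepsilon$ from vertex $j$ to vertex $k$ are recorded as a single arrow with integer label $\varepsilon m$. The forbidden matrix $\mathcal{FM}(L)$ is the $n\times n$ integer matrix whose $(j,k)$ entry is the label on the arrow from vertex $j$ to vertex $k$ of $\mathcal{FQ}(L)$ ($0$ if there is none). *)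

theory Defs
  imports "HOL-Analysis.Analysis"
begin

datatype endpt = Tl nat | Hd nat

fun arrow_of :: "endpt \<Rightarrow> nat" where
  "arrow_of (Tl a) = a"
| "arrow_of (Hd a) = a"

text \<open>A Gauss diagram: circle j (j < length ws) carries the cyclic word ws!j of
  arrow endpoints, read along its orientation (starting at an arbitrary base point);
  sg a is the sign of arrow a (0 for ids not used).\<close>
type_synonym gd = "endpt list list \<times> (nat \<Rightarrow> int)"

definition gd_arrows :: "gd \<Rightarrow> nat set" where
  "gd_arrows D = {a. \<exists>w\<in>set (fst D). Tl a \<in> set w \<or> Hd a \<in> set w}"

definition wf_gd :: "gd \<Rightarrow> bool" where
  "wf_gd D \<longleftrightarrow>
     distinct (concat (fst D)) \<and>
     (\<forall>a. (\<exists>w\<in>set (fst D). Tl a \<in> set w) \<longleftrightarrow> (\<exists>w\<in>set (fst D). Hd a \<in> set w)) \<and>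
     (\<forall>a. if a \<in> gd_arrows D then snd D a = 1 \<or> snd D a = -1 else snd D a = 0)"

definition circ :: "gd \<Rightarrow> endpt \<Rightarrow> nat" where
  "circ D e = (THE j. j < length (fst D) \<and> e \<in> set (fst D ! j))"

definition adjacent_in :: "gd \<Rightarrow> endpt \<Rightarrow> endpt \<Rightarrow> bool" where
  "adjacent_in D e1 e2 \<longleftrightarrow>
     (\<exists>j u v. j < length (fst D) \<and> fst D ! j = u @ [e1, e2] @ v)"

definition relabel :: "(endpt \<Rightarrow> endpt) \<Rightarrow> gd \<Rightarrow> gd" where
  "relabel \<sigma> D = (map (map \<sigma>) (fst D), snd D)"

definition swap_ep :: "endpt \<Rightarrow> endpt \<Rightarrow> endpt \<Rightarrow> endpt" where
  "swap_ep e1 e2 e = (if e = e1 then e2 else if e = e2 then e1 else e)"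

definition delete_arrows :: "nat set \<Rightarrow> gd \<Rightarrow> gd" where
  "delete_arrows A D =
     (map (filter (\<lambda>e. arrow_of e \<notin> A)) (fst D), (\<lambda>a. if a \<in> A then 0 else snd D a))"

text \<open>Change of base point on circle j (the words are cyclic).\<close>
definition rot_move :: "gd \<Rightarrow> gd \<Rightarrow> bool" where
  "rot_move D D' \<longleftrightarrow>
     (\<exists>j < length (fst D). D' = ((fst D)[j := rotate1 (fst D ! j)], snd D))"

definition forbidden_move :: "gd \<Rightarrow> gd \<Rightarrow> bool" where
  "forbidden_move D D' \<longleftrightarrow>
     (\<exists>a b. a \<noteq> b \<and>
        ((adjacent_in D (Hd a) (Hd b) \<and> D' = relabel (swap_ep (Hd a) (Hd b)) D) \<or>
         (adjacent_in D (Tl a) (Tl b) \<and> D' = relabel (swap_ep (Tl a) (Tl b)) D)))"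

definition R1_move :: "gd \<Rightarrow> gd \<Rightarrow> bool" where
  "R1_move D D' \<longleftrightarrow>
     (\<exists>a. (adjacent_in D (Tl a) (Hd a) \<or> adjacent_in D (Hd a) (Tl a)) \<and>
          D' = delete_arrows {a} D)"

definition R2_move :: "gd \<Rightarrow> gd \<Rightarrow> bool" where
  "R2_move D D' \<longleftrightarrow>
     (\<exists>a b. a \<noteq> b \<and> a \<in> gd_arrows D \<and> b \<in> gd_arrows D \<and> snd D a = - snd D b \<and>
        (adjacent_in D (Tl a) (Tl b) \<or> adjacent_in D (Tl b) (Tl a)) \<and>
        (adjacent_in D (Hd a) (Hd b) \<or> adjacent_in D (Hd b) (Hd a)) \<and>
        D' = delete_arrows {a, b} D)"

text \<open>Strands top/middle/bottom; arrow x: top to middle,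
  y: top to bottom, z: middle to bottom. The three pairs of endpoints
  (Tl x,Tl y), (Hd x,Tl z), (Hd y,Hd z) are adjacent; pT, pM, pB are +1 if
  the pair occurs in the listed order and -1 otherwise.  The move reverses the
  three pairs; it exists iff sg y * sg z = pT * pM and sg x * sg z = pT * pB
  (this is exactly the set of sign/order configurations realised by three
  strands forming a small triangle in the plane).\<close>
definition ord_sign :: "gd \<Rightarrow> endpt \<Rightarrow> endpt \<Rightarrow> int" where
  "ord_sign D e1 e2 = (if adjacent_in D e1 e2 then 1 else -1)"

definition R3_move :: "gd \<Rightarrow> gd \<Rightarrow> bool" where
  "R3_move D D' \<longleftrightarrow>
     (\<exists>x y z. distinct [x, y, z] \<and> {x, y, z} \<subseteq> gd_arrows D \<and>
        (adjacent_in D (Tl x) (Tl y) \<or> adjacent_in D (Tl y) (Tl x)) \<and>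
        (adjacent_in D (Hd x) (Tl z) \<or> adjacent_in D (Tl z) (Hd x)) \<and>
        (adjacent_in D (Hd y) (Hd z) \<or> adjacent_in D (Hd z) (Hd y)) \<and>
        snd D y * snd D z = ord_sign D (Tl x) (Tl y) * ord_sign D (Hd x) (Tl z) \<and>
        snd D x * snd D z = ord_sign D (Tl x) (Tl y) * ord_sign D (Hd y) (Hd z) \<and>
        D' = relabel (swap_ep (Tl x) (Tl y) \<circ> swap_ep (Hd x) (Tl z) \<circ> swap_ep (Hd y) (Hd z)) D)"

definition gd_step :: "gd \<Rightarrow> gd \<Rightarrow> bool" where
  "gd_step D D' \<longleftrightarrow> wf_gd D \<and> wf_gd D' \<and>
     (rot_move D D' \<or> forbidden_move D D' \<or> R1_move D D' \<or> R2_move D D' \<or> R3_move D D')"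

definition gd_equiv :: "gd \<Rightarrow> gd \<Rightarrow> bool" where
  "gd_equiv = (symclp gd_step)\<^sup>*\<^sup>*"

definition reduced_gd :: "gd \<Rightarrow> bool" where
  "reduced_gd D \<longleftrightarrow> wf_gd D \<and>
     (\<forall>a\<in>gd_arrows D. circ D (Tl a) \<noteq> circ D (Hd a)) \<and>
     (\<forall>a\<in>gd_arrows D. \<forall>b\<in>gd_arrows D.
        circ D (Tl a) = circ D (Tl b) \<and> circ D (Hd a) = circ D (Hd b) \<longrightarrow> snd D a = snd D b)"

text \<open>Entry (j,k): for a reduced diagram, the m arrows from circle j to circle k
  all have the same sign \<epsilon>, so this sum is the label \<epsilon> m (0 if there is none).\<close>
definition forbidden_matrix :: "gd \<Rightarrow> nat \<Rightarrow> nat \<Rightarrow> int" where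
  "forbidden_matrix D j k =
     (\<Sum>a\<in>{a\<in>gd_arrows D. circ D (Tl a) = j \<and> circ D (Hd a) = k}. snd D a)"

text \<open>A planar link diagram: n smooth (C^1, regular) closed curves gamma j in the
  plane (period 1), whose only multiple points are transverse double points; the
  double points are exactly the arrows, the tail lying on the over-strand and the
  head on the under-strand, and the sign of the crossing is the sign of
  det(over-tangent, under-tangent).\<close>
definition planar_gd :: "gd \<Rightarrow> bool" where
  "planar_gd D \<longleftrightarrow> wf_gd D \<and>
    (\<exists>(\<gamma> :: nat \<Rightarrow> real \<Rightarrow> complex) \<gamma>' (pos :: endpt \<Rightarrow> real).
       (\<forall>j < length (fst D).
          (\<forall>t. (\<gamma> j has_vector_derivative \<gamma>' j t) (at t) \<and> \<gamma>' j t \<noteq> 0 \<and> \<gamma> j (t + 1) = \<gamma> j t) \<and>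
          continuous_on UNIV (\<gamma>' j) \<and>
          sorted_wrt (<) (map pos (fst D ! j)) \<and>
          (\<forall>e\<in>set (fst D ! j). 0 \<le> pos e \<and> pos e < 1)) \<and>
       (\<forall>a\<in>gd_arrows D.
          \<gamma> (circ D (Tl a)) (pos (Tl a)) = \<gamma> (circ D (Hd a)) (pos (Hd a)) \<and>
          of_int (snd D a) =
            sgn (Im (cnj (\<gamma>' (circ D (Tl a)) (pos (Tl a))) * \<gamma>' (circ D (Hd a)) (pos (Hd a))))) \<and>
       (\<forall>j < length (fst D). \<forall>k < length (fst D). \<forall>s\<in>{0..<1}. \<forall>t\<in>{0..<1}.
          \<gamma> j s = \<gamma> k t \<and> (j, s) \<noteq> (k, t) \<longrightarrow>
          (\<exists>a\<in>gd_arrows D.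
             ((j, s) = (circ D (Tl a), pos (Tl a)) \<and> (k, t) = (circ D (Hd a), pos (Hd a))) \<or>
             ((k, t) = (circ D (Tl a), pos (Tl a)) \<and> (j, s) = (circ D (Hd a), pos (Hd a))))))"

end

theory Submission
  imports Defs "HOL-Complex_Analysis.Complex_Analysis"
begin

lemma distinct_concat_nth:
  "distinct (concat ws) \<Longrightarrow> i < length ws \<Longrightarrow> j < length ws \<Longrightarrow>
   e \<in> set (ws!i) \<Longrightarrow> e \<in> set (ws!j) \<Longrightarrow> i = j"
proof (induction ws arbitrary: i j)
  case Nil then show ?case by simp
next
  case (Cons w ws)
  then show ?case
    by (cases i; cases j) (auto, (metis UN_I disjoint_iff nth_mem)+)
qed

lemma circ_eq:
  assumes "distinct (concat (fst D))" "j < length (fst D)" "e \<in> set (fst D ! j)"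
  shows "circ D e = j"
  unfolding circ_def
proof (rule the_equality)
  show "j < length (fst D) \<and> e \<in> set (fst D ! j)" using assms by simp
  show "\<And>i. i < length (fst D) \<and> e \<in> set (fst D ! i) \<Longrightarrow> i = j"
    using assms distinct_concat_nth by metis
qed

lemma gd_arrows_alt:
  "gd_arrows D = {a. \<exists>j<length (fst D). Tl a \<in> set (fst D ! j) \<or> Hd a \<in> set (fst D ! j)}"
  unfolding gd_arrows_def set_conv_nth[of "fst D"] by blast

lemma FM_cong:
  assumes "length (fst D') = length (fst D)"
    and "\<And>j. j < length (fst D) \<Longrightarrow> set (fst D' ! j) = set (fst D ! j)"
    and "snd D' = snd D"
  shows "forbidden_matrix D' = forbidden_matrix D"
proof -
  have c: "circ D' = circ D"
    unfolding circ_def using assms by (intro ext) (metis (no_types, lifting))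
  have g: "gd_arrows D' = gd_arrows D"
    unfolding gd_arrows_alt using assms by auto
  show ?thesis unfolding forbidden_matrix_def c g assms(3) by simp
qed

lemma FM_rot:
  assumes "rot_move D D'" shows "forbidden_matrix D' = forbidden_matrix D"
proof -
  obtain j0 where j0: "j0 < length (fst D)" "D' = ((fst D)[j0 := rotate1 (fst D ! j0)], snd D)"
    using assms unfolding rot_move_def by blast
  show ?thesis
    by (rule FM_cong) (use j0 in \<open>auto simp: nth_list_update\<close>)
qed

lemma FM_relabel:
  assumes "\<And>j. j < length (fst D) \<Longrightarrow> \<sigma> ` set (fst D ! j) = set (fst D ! j)"
  shows "forbidden_matrix (relabel \<sigma> D) = forbidden_matrix D"
  by (rule FM_cong) (use assms in \<open>auto simp: relabel_def\<close>)

lemma swap_image: "(e1 \<in> A) = (e2 \<in> A) \<Longrightarrow> swap_ep e1 e2 ` A = A"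
  unfolding swap_ep_def by (auto simp: image_iff)

lemma adjacent_same:
  assumes "adjacent_in D e1 e2" "distinct (concat (fst D))" "j < length (fst D)"
  shows "(e1 \<in> set (fst D ! j)) = (e2 \<in> set (fst D ! j))"
proof -
  obtain j0 u v where "j0 < length (fst D)" "fst D ! j0 = u @ [e1, e2] @ v"
    using assms unfolding adjacent_in_def by blast
  moreover have "e1 \<in> set (fst D ! j0)" "e2 \<in> set (fst D ! j0)"
    using calculation by simp_all
  ultimately show ?thesis using distinct_concat_nth[OF assms(2) _ assms(3)]
    by metis
qed

lemma adjacent_circ:
  assumes "adjacent_in D e1 e2" "distinct (concat (fst D))"
  shows "circ D e1 = circ D e2"
proof -
  obtain j0 u v where "j0 < length (fst D)" "fst D ! j0 = u @ [e1, e2] @ v"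
    using assms unfolding adjacent_in_def by blast
  then show ?thesis using circ_eq[OF assms(2)] by simp
qed

lemma swap_pres:
  assumes "adjacent_in D e1 e2" "distinct (concat (fst D))" "j < length (fst D)"
  shows "swap_ep e1 e2 ` set (fst D ! j) = set (fst D ! j)"
  by (rule swap_image) (rule adjacent_same[OF assms])

lemma finite_gd_arrows: "finite (gd_arrows D)"
proof -
  have "gd_arrows D \<subseteq> arrow_of ` set (concat (fst D))"
    unfolding gd_arrows_def by (force simp: image_iff intro: bexI[of _ "Tl _"] bexI[of _ "Hd _"])
  then show ?thesis by (rule finite_subset) simp
qed

lemma delete_facts:
  shows "gd_arrows (delete_arrows A D) = gd_arrows D - A"
    and "arrow_of e \<notin> A \<Longrightarrow> circ (delete_arrows A D) e = circ D e"
    and "a \<notin> A \<Longrightarrow> snd (delete_arrows A D) a = snd D a"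
proof -
  show "gd_arrows (delete_arrows A D) = gd_arrows D - A"
    unfolding gd_arrows_def delete_arrows_def by auto
  show "arrow_of e \<notin> A \<Longrightarrow> circ (delete_arrows A D) e = circ D e"
    unfolding circ_def delete_arrows_def
    by (intro arg_cong[where f=The] ext) (auto simp: nth_map)
  show "a \<notin> A \<Longrightarrow> snd (delete_arrows A D) a = snd D a"
    unfolding delete_arrows_def by simp
qed

lemma FM_delete:
  "forbidden_matrix D j k = forbidden_matrix (delete_arrows A D) j k +
     (\<Sum>a\<in>{a\<in>gd_arrows D. circ D (Tl a) = j \<and> circ D (Hd a) = k} \<inter> A. snd D a)"
proof -
  let ?S = "{a\<in>gd_arrows D. circ D (Tl a) = j \<and> circ D (Hd a) = k}"
  have fin: "finite ?S" using finite_gd_arrows by simp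
  have "forbidden_matrix (delete_arrows A D) j k = (\<Sum>a\<in>?S - A. snd D a)"
    unfolding forbidden_matrix_def delete_facts(1)
    by (rule sum.cong) (auto simp: delete_facts)
  then show ?thesis
    unfolding forbidden_matrix_def using sum.Int_Diff[OF fin, of "\<lambda>a. snd D a" A] by simp
qed

lemma wf_distinct: "wf_gd D \<Longrightarrow> distinct (concat (fst D))"
  unfolding wf_gd_def by simp

lemma step_length: "gd_step D D' \<Longrightarrow> length (fst D') = length (fst D)"
  unfolding gd_step_def rot_move_def forbidden_move_def R1_move_def R2_move_def R3_move_def
    relabel_def delete_arrows_def by auto

lemma step_FM:
  assumes "gd_step D D'" "j \<noteq> k"
  shows "forbidden_matrix D' j k = forbidden_matrix D j k"
proof -
  have wf: "wf_gd D" and dist: "distinct (concat (fst D))"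
    using assms wf_distinct unfolding gd_step_def by auto
  consider "rot_move D D'" | "forbidden_move D D'" | "R1_move D D'" | "R2_move D D'" | "R3_move D D'"
    using assms unfolding gd_step_def by blast
  then show ?thesis
  proof cases
    case 1 then show ?thesis using FM_rot by simp
  next
    case 2
    then obtain e1 e2 where "adjacent_in D e1 e2" "D' = relabel (swap_ep e1 e2) D"
      unfolding forbidden_move_def by blast
    then show ?thesis using FM_relabel swap_pres dist by metis
  next
    case 3
    then obtain a where a: "adjacent_in D (Tl a) (Hd a) \<or> adjacent_in D (Hd a) (Tl a)"
       "D' = delete_arrows {a} D"
      unfolding R1_move_def by blast
    have "circ D (Tl a) = circ D (Hd a)" using a(1) adjacent_circ dist by metis
    then have "{a\<in>gd_arrows D. circ D (Tl a) = j \<and> circ D (Hd a) = k} \<inter> {a} = {}"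
      using assms(2) by auto
    then show ?thesis using FM_delete[of D j k "{a}"] a(2) by simp
  next
    case 4
    then obtain a b where ab: "a \<noteq> b" "snd D a = - snd D b" 
        "a \<in> gd_arrows D" "b \<in> gd_arrows D"
        "adjacent_in D (Tl a) (Tl b) \<or> adjacent_in D (Tl b) (Tl a)"
        "adjacent_in D (Hd a) (Hd b) \<or> adjacent_in D (Hd b) (Hd a)"
        "D' = delete_arrows {a, b} D"
      unfolding R2_move_def by blast
    have c1: "circ D (Tl a) = circ D (Tl b)" using ab(5) adjacent_circ dist by metis
    have c2: "circ D (Hd a) = circ D (Hd b)" using ab(6) adjacent_circ dist by metis
    let ?S = "{a\<in>gd_arrows D. circ D (Tl a) = j \<and> circ D (Hd a) = k}"
    have "(\<Sum>x\<in>?S \<inter> {a, b}. snd D x) = 0"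
    proof (cases "?S \<inter> {a, b} = {}")
      case True then show ?thesis by simp
    next
      case False
      have "?S \<inter> {a, b} = {a, b}" using False c1 c2 ab(3,4) by auto
      then show ?thesis using ab(1,2) by simp
    qed
    then show ?thesis using FM_delete[of D j k "{a,b}"] ab(7) by simp
  next
    case 5
    then obtain x y z where xyz:
        "adjacent_in D (Tl x) (Tl y) \<or> adjacent_in D (Tl y) (Tl x)"
        "adjacent_in D (Hd x) (Tl z) \<or> adjacent_in D (Tl z) (Hd x)"
        "adjacent_in D (Hd y) (Hd z) \<or> adjacent_in D (Hd z) (Hd y)"
        "D' = relabel (swap_ep (Tl x) (Tl y) \<circ> swap_ep (Hd x) (Tl z) \<circ> swap_ep (Hd y) (Hd z)) D"
      unfolding R3_move_def by blast
    have sw: "swap_ep e1 e2 ` set (fst D ! j) = set (fst D ! j)"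
      if "adjacent_in D e1 e2 \<or> adjacent_in D e2 e1" "j < length (fst D)" for e1 e2 j
    proof (rule swap_image)
      show "(e1 \<in> set (fst D ! j)) = (e2 \<in> set (fst D ! j))"
        using that adjacent_same[OF _ dist] by metis
    qed
    have "\<And>j. j < length (fst D) \<Longrightarrow>
      (swap_ep (Tl x) (Tl y) \<circ> swap_ep (Hd x) (Tl z) \<circ> swap_ep (Hd y) (Hd z)) ` set (fst D ! j)
       = set (fst D ! j)"
    proof -
      fix j assume j: "j < length (fst D)"
      show "(swap_ep (Tl x) (Tl y) \<circ> swap_ep (Hd x) (Tl z) \<circ> swap_ep (Hd y) (Hd z)) ` set (fst D ! j)
       = set (fst D ! j)"
        unfolding image_comp[symmetric] using sw[OF xyz(1) j] sw[OF xyz(2) j] sw[OF xyz(3) j]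
        by simp
    qed
    then show ?thesis using FM_relabel xyz(4) by metis
  qed
qed

lemma equiv_FM:
  assumes "gd_equiv D D'"
  shows "length (fst D') = length (fst D) \<and>
         (\<forall>j k. j \<noteq> k \<longrightarrow> forbidden_matrix D' j k = forbidden_matrix D j k)"
  using assms unfolding gd_equiv_def
proof (induction rule: rtranclp_induct)
  case base then show ?case by simp
next
  case (step y z)
  from step(2) have "gd_step y z \<or> gd_step z y" by (simp add: symclp_def)
  then have "length (fst z) = length (fst y) \<and>
         (\<forall>j k. j \<noteq> k \<longrightarrow> forbidden_matrix z j k = forbidden_matrix y j k)"
    using step_length step_FM by metis
  then show ?case using step(3) by simp
qed

definition cr :: "complex \<Rightarrow> complex \<Rightarrow> real" where
  "cr x y = Im (cnj x * y)"

lemma cr_bound: "\<bar>cr x y\<bar> \<le> cmod x * cmod y"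
  unfolding cr_def by (metis abs_Im_le_cmod complex_mod_cnj norm_mult)

lemma cr_add_right: "cr x (y + z) = cr x y + cr x z"
  and cr_add_left: "cr (x + y) z = cr x z + cr y z"
  and cr_diff_right: "cr x (y - z) = cr x y - cr x z"
  and cr_diff_left: "cr (x - y) z = cr x z - cr y z"
  and cr_minus_right: "cr x (- y) = - cr x y"
  and cr_minus_left: "cr (- x) y = - cr x y"
  and cr_self: "cr x x = 0"
  and cr_swap: "cr y x = - cr x y"
  by (simp_all add: cr_def algebra_simps)

lemma cr_scale: "cr (k * x) (k * y) = (cmod k)^2 * cr x y"
proof -
  have h: "(cmod k)^2 = (Re k)^2 + (Im k)^2" by (simp add: cmod_power2)
  show ?thesis unfolding cr_def h by (simp add: algebra_simps power2_eq_square)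
qed

lemma not_on_segment_cr:
  assumes "cr (b - a) (z - a) \<noteq> 0" shows "z \<notin> closed_segment a b"
proof
  assume "z \<in> closed_segment a b"
  then obtain u where "z = (1 - u) *\<^sub>R a + u *\<^sub>R b" unfolding closed_segment_def by blast
  then have "z - a = of_real u * (b - a)" by (simp add: scaleR_conv_of_real algebra_simps)
  moreover have "cnj (b-a) * (of_real u * (b-a)) = of_real u * ((b-a) * cnj (b-a))"
    by (simp only: ac_simps)
  ultimately have "cr (b - a) (z - a) = 0" unfolding cr_def by (simp only: complex_mult_cnj) simp
  then show False using assms by simp
qed

lemma cr_lin_form: "Im ((b - a) * cnj (b - z)) = cr (b - a) (z - a)"
  by (simp add: cr_def algebra_simps)

lemma my_triangle:
  assumes "cr (b - a) (z - a) > 0" "cr (c - b) (z - b) > 0" "cr (a - c) (z - c) > 0"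
  shows "winding_number (linepath a b +++ linepath b c +++ linepath c a) z = 1"
proof -
  have znot: "z \<notin> closed_segment a b" "z \<notin> closed_segment b c" "z \<notin> closed_segment c a"
    using assms not_on_segment_cr by (metis less_irrefl)+
  have p: "0 < Im ((b - a) * cnj (b - z))" "0 < Im ((c - b) * cnj (c - z))" "0 < Im ((a - c) * cnj (a - z))"
    using assms by (simp_all only: cr_lin_form)
  have gt0: "0 < Re (winding_number (linepath a b +++ linepath b c +++ linepath c a) z)"
    using p znot
    by (simp add: winding_number_linepath_pos_lt path_image_join winding_number_join_pos_combined)
  have lt2: "Re (winding_number (linepath a b +++ linepath b c +++ linepath c a) z) < 2"
    using winding_number_lt_half_linepath [of _ a b]
    using winding_number_lt_half_linepath [of _ b c]
    using winding_number_lt_half_linepath [of _ c a] znot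
    by (fastforce simp add: winding_number_join path_image_join)
  show ?thesis
    by (rule winding_number_eq_1) (simp_all add: path_image_join gt0 lt2 znot)
qed

lemma halfplane_convex: "convex {y. cr d (y - a) \<ge> 0}"
  unfolding convex_alt
proof safe
  fix x y :: complex and u :: real
  assume h: "0 \<le> cr d (x - a)" "0 \<le> cr d (y - a)" "0 \<le> u" "u \<le> 1"
  have "cr d ((1 - u) *\<^sub>R x + u *\<^sub>R y - a) = (1 - u) * cr d (x - a) + u * cr d (y - a)"
    by (simp add: cr_def scaleR_conv_of_real algebra_simps)
  then show "0 \<le> cr d ((1 - u) *\<^sub>R x + u *\<^sub>R y - a)"
    using h by simp
qed

lemma seg_jump:
  fixes a b c z1 z2 :: complex and R :: "real \<Rightarrow> complex"
  assumes R: "path R" "pathstart R = b" "pathfinish R = a"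
    and disj: "closed_segment z1 z2 \<inter> (path_image R \<union> closed_segment a c \<union> closed_segment c b) = {}"
    and t1: "cr (b - a) (z1 - a) > 0" "cr (c - b) (z1 - b) > 0" "cr (a - c) (z1 - c) > 0"
    and t2: "cr (b - a) (z2 - a) < 0" and tc: "cr (b - a) (c - a) > 0"
  shows "winding_number (linepath a b +++ R) z1 - winding_number (linepath a b +++ R) z2 = 1"
proof -
  let ?T = "linepath a b +++ linepath b c +++ linepath c a"
  let ?Q = "linepath a c +++ linepath c b +++ R"
  have z1R: "z1 \<notin> path_image R" and z2R: "z2 \<notin> path_image R"
    and z1ac: "z1 \<notin> closed_segment a c" and z2ac: "z2 \<notin> closed_segment a c"
    and z1cb: "z1 \<notin> closed_segment c b" and z2cb: "z2 \<notin> closed_segment c b"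
    using disj by auto
  have z1ab: "z1 \<notin> closed_segment a b" and z2ab: "z2 \<notin> closed_segment a b"
    using t1 t2 not_on_segment_cr by (metis less_irrefl)+
  have dec: "winding_number (linepath a b +++ R) z = winding_number ?T z + winding_number ?Q z"
    if "z \<notin> path_image R" "z \<notin> closed_segment a c" "z \<notin> closed_segment c b"
       "z \<notin> closed_segment a b" for z
  proof -
    have s: "z \<notin> closed_segment b c" "z \<notin> closed_segment c a"
      using that closed_segment_commute by blast+
    have r1: "winding_number (linepath c a) z = - winding_number (linepath a c) z"
      using winding_number_reversepath[of "linepath a c" z] that by simp
    have r2: "winding_number (linepath b c) z = - winding_number (linepath c b) z"
      using winding_number_reversepath[of "linepath c b" z] that by simp
    show ?thesis
      using that s R r1 r2
      by (simp add: winding_number_join path_image_join not_in_path_image_join)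
  qed
  have Qconst: "winding_number ?Q z1 = winding_number ?Q z2"
  proof -
    have "winding_number ?Q constant_on closed_segment z1 z2"
    proof (rule winding_number_constant)
      show "path ?Q" using R by simp
      show "pathfinish ?Q = pathstart ?Q" using R by simp
      show "connected (closed_segment z1 z2)" by simp
      show "closed_segment z1 z2 \<inter> path_image ?Q = {}"
        using disj R by (auto simp: path_image_join)
    qed
    then show ?thesis unfolding constant_on_def by auto
  qed
  have T1: "winding_number ?T z1 = 1" using my_triangle t1 by blast
  have T2: "winding_number ?T z2 = 0"
  proof (rule winding_number_zero_outside)
    let ?H = "{y. cr (b - a) (y - a) \<ge> 0}"
    show "convex ?H" by (rule halfplane_convex)
    show "z2 \<notin> ?H" using t2 by simp
    have "a \<in> ?H" "b \<in> ?H" "c \<in> ?H" using tc by (auto simp: cr_self cr_def algebra_simps)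
    then have "closed_segment a b \<subseteq> ?H" "closed_segment b c \<subseteq> ?H" "closed_segment c a \<subseteq> ?H"
      using closed_segment_subset halfplane_convex by metis+
    then show "path_image ?T \<subseteq> ?H"
      by (simp add: path_image_join)
  qed auto
  show ?thesis
    using dec[OF z1R z1ac z1cb z1ab] dec[OF z2R z2ac z2cb z2ab] Qconst T1 T2 by simp
qed

lemma NI_aux:
  assumes "cmod Ea \<le> \<eta>" "cmod Eb \<le> \<eta>" "0 < \<eta>" "\<eta> \<le> 1/100" "cmod Z \<le> 1/10"
  shows "\<bar>cr (Eb - Ea) (Z + 1 - Ea)\<bar> \<le> 9/4 * \<eta>"
    and "\<bar>cr (\<i> - 1) (Z - Eb)\<bar> \<le> 1/4"
    and "\<bar>cr Eb (Z - 1 - Eb)\<bar> \<le> 1/50"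
    and "\<bar>cr (-1 - \<i>) Z\<bar> \<le> 1/4"
    and "\<bar>cr Ea (Z - \<i>)\<bar> \<le> 1/50"
    and "\<bar>cr (Eb - Ea) (\<i> + 1 - Ea)\<bar> \<le> 1/10"
    and "\<bar>Im Ea\<bar> \<le> \<eta>"
proof -
  have n1: "cmod (Eb - Ea) \<le> 2 * \<eta>" using norm_triangle_ineq4[of Eb Ea] assms by linarith
  have n2: "cmod (Z + 1 - Ea) \<le> 9/8" using norm_triangle_ineq4[of "Z + 1" Ea] norm_triangle_ineq[of Z 1] assms by simp
  have "\<bar>cr (Eb - Ea) (Z + 1 - Ea)\<bar> \<le> (2 * \<eta>) * (9/8)"
    using order_trans[OF cr_bound[of "Eb - Ea" "Z + 1 - Ea"] mult_mono[OF n1 n2 _ norm_ge_zero]] assms by simp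
  then show "\<bar>cr (Eb - Ea) (Z + 1 - Ea)\<bar> \<le> 9/4 * \<eta>" by simp
  have i1: "cmod (\<i> - 1) \<le> 2" using norm_triangle_ineq4[of "\<i>" 1] by simp
  have n3: "cmod (Z - Eb) \<le> 1/8" using norm_triangle_ineq4[of Z Eb] assms by simp
  have "\<bar>cr (\<i> - 1) (Z - Eb)\<bar> \<le> 2 * (1/8)"
    using order_trans[OF cr_bound[of "\<i> - 1" "Z - Eb"] mult_mono[OF i1 n3 _ norm_ge_zero]] assms by simp
  then show "\<bar>cr (\<i> - 1) (Z - Eb)\<bar> \<le> 1/4" by simp
  have n4: "cmod (Z - 1 - Eb) \<le> 2" using norm_triangle_ineq4[of "Z - 1" Eb] norm_triangle_ineq4[of Z 1] assms by simp
  have "\<bar>cr Eb (Z - 1 - Eb)\<bar> \<le> (1/100) * 2"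
    using order_trans[OF cr_bound[of Eb "Z - 1 - Eb"] mult_mono[OF _ n4 _ norm_ge_zero, of "cmod Eb" "1/100"]] assms by simp
  then show "\<bar>cr Eb (Z - 1 - Eb)\<bar> \<le> 1/50" by simp
  have i2: "cmod (-1 - \<i>) \<le> 2" using norm_triangle_ineq4[of "-1" "\<i>"] by simp
  have "\<bar>cr (-1 - \<i>) Z\<bar> \<le> 2 * (1/10)"
    using order_trans[OF cr_bound[of "-1 - \<i>" Z] mult_mono[OF i2 assms(5) _ norm_ge_zero]] assms by simp
  then show "\<bar>cr (-1 - \<i>) Z\<bar> \<le> 1/4" by simp
  have n5: "cmod (Z - \<i>) \<le> 2" using norm_triangle_ineq4[of Z "\<i>"] assms by simp
  have "\<bar>cr Ea (Z - \<i>)\<bar> \<le> (1/100) * 2"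
    using order_trans[OF cr_bound[of Ea "Z - \<i>"] mult_mono[OF _ n5 _ norm_ge_zero, of "cmod Ea" "1/100"]] assms by simp
  then show "\<bar>cr Ea (Z - \<i>)\<bar> \<le> 1/50" by simp
  have n6: "cmod (\<i> + 1 - Ea) \<le> 3" using norm_triangle_ineq4[of "\<i> + 1" Ea] norm_triangle_ineq[of "\<i>" 1] assms by simp
  have n7: "cmod (Eb - Ea) \<le> 1/50" using n1 assms by simp
  have "\<bar>cr (Eb - Ea) (\<i> + 1 - Ea)\<bar> \<le> (1/50) * 3"
    using order_trans[OF cr_bound[of "Eb - Ea" "\<i> + 1 - Ea"] mult_mono[OF n7 n6 _ norm_ge_zero]] assms by simp
  then show "\<bar>cr (Eb - Ea) (\<i> + 1 - Ea)\<bar> \<le> 1/10" by simp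
  show "\<bar>Im Ea\<bar> \<le> \<eta>" using abs_Im_le_cmod[of Ea] assms by linarith
qed

lemma NI:
  assumes "cmod Ea \<le> \<eta>" "cmod Eb \<le> \<eta>" "0 < \<eta>" "\<eta> \<le> 1/100" "cmod Z \<le> 1/10"
  shows "Im Z \<ge> 4 * \<eta> \<Longrightarrow> cr ((1 + Eb) - (-1 + Ea)) (Z - (-1 + Ea)) > 0"
    and "Im Z \<le> - 4 * \<eta> \<Longrightarrow> cr ((1 + Eb) - (-1 + Ea)) (Z - (-1 + Ea)) < 0"
    and "cr (\<i> - (1 + Eb)) (Z - (1 + Eb)) > 0"
    and "cr ((-1 + Ea) - \<i>) (Z - \<i>) > 0"
    and "cr ((1 + Eb) - (-1 + Ea)) (\<i> - (-1 + Ea)) > 0"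
proof -
  note b = NI_aux[OF assms]
  have e1: "cr ((1 + Eb) - (-1 + Ea)) (Z - (-1 + Ea)) = 2 * Im Z - 2 * Im Ea + cr (Eb - Ea) (Z + 1 - Ea)"
    by (simp add: cr_def algebra_simps)
  show "Im Z \<ge> 4 * \<eta> \<Longrightarrow> cr ((1 + Eb) - (-1 + Ea)) (Z - (-1 + Ea)) > 0"
    using e1 b assms(3) by linarith
  show "Im Z \<le> - 4 * \<eta> \<Longrightarrow> cr ((1 + Eb) - (-1 + Ea)) (Z - (-1 + Ea)) < 0"
    using e1 b assms(3) by linarith
  have e2: "cr (\<i> - (1 + Eb)) (Z - (1 + Eb)) = 1 + cr (\<i> - 1) (Z - Eb) - cr Eb (Z - 1 - Eb)"
    by (simp add: cr_def algebra_simps)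
  show "cr (\<i> - (1 + Eb)) (Z - (1 + Eb)) > 0" using e2 b by linarith
  have e3: "cr ((-1 + Ea) - \<i>) (Z - \<i>) = 1 + cr (-1 - \<i>) Z + cr Ea (Z - \<i>)"
    by (simp add: cr_def algebra_simps)
  show "cr ((-1 + Ea) - \<i>) (Z - \<i>) > 0" using e3 b by linarith
  have e4: "cr ((1 + Eb) - (-1 + Ea)) (\<i> - (-1 + Ea)) = 2 - 2 * Im Ea + cr (Eb - Ea) (\<i> + 1 - Ea)"
    by (simp add: cr_def algebra_simps)
  show "cr ((1 + Eb) - (-1 + Ea)) (\<i> - (-1 + Ea)) > 0" using e4 b assms by linarith
qed

lemma NI_seg:
  fixes l :: real
  assumes "cmod E \<le> 1/100" "0 \<le> l" "l \<le> 1"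
  shows "cmod ((1 - complex_of_real l) * (-1 + E) + complex_of_real l * \<i>) > 1/10"
    and "cmod ((1 - complex_of_real l) * \<i> + complex_of_real l * (1 + E)) > 1/10"
proof -
  have c1: "1 - complex_of_real l = complex_of_real (1 - l)" by simp
  have e1: "cmod ((1 - complex_of_real l) * E) \<le> 1/100"
  proof -
    have "cmod ((1 - complex_of_real l) * E) = (1 - l) * cmod E"
      unfolding c1 norm_mult norm_of_real using assms by simp
    also have "\<dots> \<le> 1 * (1/100)" by (rule mult_mono) (use assms in auto)
    finally show ?thesis by simp
  qed
  have e2: "cmod (complex_of_real l * E) \<le> 1/100"
  proof -
    have "cmod (complex_of_real l * E) = l * cmod E"
      unfolding norm_mult using assms by simp
    also have "\<dots> \<le> 1 * (1/100)" by (rule mult_mono) (use assms in auto)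
    finally show ?thesis by simp
  qed
  define w1 where "w1 = -(1 - complex_of_real l) + complex_of_real l * \<i>"
  have "Re w1 = l - 1" "Im w1 = l" unfolding w1_def by simp_all
  then have m1: "cmod w1 \<ge> 1/2"
    using abs_Re_le_cmod[of w1] abs_Im_le_cmod[of w1] assms by linarith
  have eq1: "(1 - complex_of_real l) * (-1 + E) + complex_of_real l * \<i> = w1 + (1 - complex_of_real l) * E"
    unfolding w1_def by (simp add: algebra_simps)
  show "cmod ((1 - complex_of_real l) * (-1 + E) + complex_of_real l * \<i>) > 1/10"
    unfolding eq1 using m1 e1 norm_diff_ineq[of w1 "(1 - complex_of_real l) * E"] by linarith
  define w2 where "w2 = (1 - complex_of_real l) * \<i> + complex_of_real l"
  have "Re w2 = l" "Im w2 = 1 - l" unfolding w2_def by simp_all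
  then have m2: "cmod w2 \<ge> 1/2"
    using abs_Re_le_cmod[of w2] abs_Im_le_cmod[of w2] assms by linarith
  have eq2: "(1 - complex_of_real l) * \<i> + complex_of_real l * (1 + E) = w2 + complex_of_real l * E"
    unfolding w2_def by (simp add: algebra_simps)
  show "cmod ((1 - complex_of_real l) * \<i> + complex_of_real l * (1 + E)) > 1/10"
    unfolding eq2 using m2 e2 norm_diff_ineq[of w2 "complex_of_real l * E"] by linarith
qed

lemma cr_v_kZ: "cr v (complex_of_real d * v * Z) = d * (cmod v)^2 * Im Z"
proof -
  have h: "(cmod v)^2 = (Re v)^2 + (Im v)^2" by (simp add: cmod_power2)
  show ?thesis unfolding cr_def h by (simp add: algebra_simps power2_eq_square)
qed

lemma cr_v_v: "cr v (complex_of_real x * v) = 0"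
  unfolding cr_def by (simp add: algebra_simps)

lemma jump_normalized:
  fixes h :: "real \<Rightarrow> complex" and v z1 z2 p :: complex and \<delta> \<eta> :: real
  assumes hpath: "path h" "h 1 = h 0"
    and p: "p = h (1/2)" and v: "v \<noteq> 0" and \<delta>: "0 < \<delta>" "\<delta> < 1/2"
    and \<eta>: "0 < \<eta>" "\<eta> \<le> 1/100"
    and approx: "\<And>x. \<bar>x\<bar> \<le> \<delta> \<Longrightarrow> cmod (h (1/2 + x) - p - complex_of_real x * v) \<le> \<eta> * cmod v * \<bar>x\<bar>"
    and far: "\<And>t. t \<in> {0..1} \<Longrightarrow> \<delta> \<le> \<bar>t - 1/2\<bar> \<Longrightarrow> \<delta> * cmod v / 2 \<le> cmod (h t - p)"
    and z1: "cmod (z1 - p) \<le> \<delta> * cmod v / 10" "4 * \<eta> * \<delta> * (cmod v)^2 \<le> cr v (z1 - p)"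
    and z2: "cmod (z2 - p) \<le> \<delta> * cmod v / 10" "cr v (z2 - p) \<le> - 4 * \<eta> * \<delta> * (cmod v)^2"
  shows "z1 \<notin> path_image h \<and> z2 \<notin> path_image h \<and> winding_number h z1 - winding_number h z2 = 1"
proof -
  have nv: "cmod v > 0" using v by simp
  define k where "k = complex_of_real \<delta> * v"
  have k0: "k \<noteq> 0" and nk: "cmod k = \<delta> * cmod v" using \<delta> v by (auto simp: k_def norm_mult)
  define u where "u = 1/2 - \<delta>"
  define w where "w = 1/2 + \<delta>"
  have uw: "0 \<le> u" "u \<le> 1" "0 \<le> w" "w \<le> 1" "u \<le> w" using \<delta> by (auto simp: u_def w_def)
  define a where "a = h u"
  define b where "b = h w"
  define c where "c = p + k * \<i>"
  define Ea where "Ea = (a - p) / k + 1"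
  define Eb where "Eb = (b - p) / k - 1"
  have aE: "a = p + k * (-1 + Ea)" and bE: "b = p + k * (1 + Eb)"
    using k0 by (simp_all add: Ea_def Eb_def field_simps)
  have nEa: "cmod Ea \<le> \<eta>"
  proof -
    have "cmod (a - p - complex_of_real (-\<delta>) * v) \<le> \<eta> * cmod v * \<bar>-\<delta>\<bar>"
      using approx[of "-\<delta>"] \<delta> by (simp add: a_def u_def)
    moreover have "a - p - complex_of_real (-\<delta>) * v = k * Ea"
      using k0 by (simp add: Ea_def k_def field_simps)
    ultimately have "\<delta> * cmod v * cmod Ea \<le> \<delta> * cmod v * \<eta>"
      using \<delta> by (simp add: norm_mult nk mult.commute mult.left_commute)
    then show ?thesis using \<delta> nv by simp
  qed
  have nEb: "cmod Eb \<le> \<eta>"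
  proof -
    have "cmod (b - p - complex_of_real \<delta> * v) \<le> \<eta> * cmod v * \<bar>\<delta>\<bar>"
      using approx[of "\<delta>"] \<delta> by (simp add: b_def w_def)
    moreover have "b - p - complex_of_real \<delta> * v = k * Eb"
      using k0 by (simp add: Eb_def k_def field_simps)
    ultimately have "\<delta> * cmod v * cmod Eb \<le> \<delta> * cmod v * \<eta>"
      using \<delta> by (simp add: norm_mult nk mult.commute mult.left_commute)
    then show ?thesis using \<delta> nv by simp
  qed
  define Z1 where "Z1 = (z1 - p) / k"
  define Z2 where "Z2 = (z2 - p) / k"
  have z1E: "z1 = p + k * Z1" and z2E: "z2 = p + k * Z2" using k0 by (simp_all add: Z1_def Z2_def)
  have nZ: "cmod Z1 \<le> 1/10" "cmod Z2 \<le> 1/10"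
    using z1(1) z2(1) \<delta> nv by (simp_all add: Z1_def Z2_def norm_divide nk divide_le_eq)
  have crZ: "cr v (z1 - p) = \<delta> * (cmod v)^2 * Im Z1" "cr v (z2 - p) = \<delta> * (cmod v)^2 * Im Z2"
    using cr_v_kZ[of v \<delta> Z1] cr_v_kZ[of v \<delta> Z2] z1E z2E by (simp_all add: k_def)
  have ImZ: "Im Z1 \<ge> 4 * \<eta>" "Im Z2 \<le> - 4 * \<eta>"
  proof -
    have pos: "\<delta> * (cmod v)^2 > 0" using \<delta> nv by simp
    show "Im Z1 \<ge> 4 * \<eta>"
      using z1(2) crZ(1) pos by (smt (verit) mult_le_cancel_left_pos mult.commute mult.assoc)
    show "Im Z2 \<le> - 4 * \<eta>"
      using z2(2) crZ(2) pos by (smt (verit) mult_le_cancel_left_pos mult.commute mult.assoc)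
  qed
  note ni1 = NI[OF nEa nEb \<eta> nZ(1)]
  note ni2 = NI[OF nEa nEb \<eta> nZ(2)]
  have kpos: "(cmod k)^2 > 0" using k0 by simp
  have sc: "cr (k * X) (k * Y) > 0" if "cr X Y > 0" for X Y
    using cr_scale[of k X Y] kpos that by simp
  have sc': "cr (k * X) (k * Y) < 0" if "cr X Y < 0" for X Y
    using cr_scale[of k X Y] kpos that by (simp add: mult_pos_neg)
  have t1: "cr (b - a) (z1 - a) > 0" "cr (c - b) (z1 - b) > 0" "cr (a - c) (z1 - c) > 0"
  proof -
    have "b - a = k * ((1 + Eb) - (-1 + Ea))" "z1 - a = k * (Z1 - (-1 + Ea))"
      "c - b = k * (\<i> - (1 + Eb))" "z1 - b = k * (Z1 - (1 + Eb))"
      "a - c = k * ((-1 + Ea) - \<i>)" "z1 - c = k * (Z1 - \<i>)"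
      using aE bE z1E by (simp_all add: c_def algebra_simps)
    then show "cr (b - a) (z1 - a) > 0" "cr (c - b) (z1 - b) > 0" "cr (a - c) (z1 - c) > 0"
      using sc ni1(1)[OF ImZ(1)] ni1(3) ni1(4) by simp_all
  qed
  have t2: "cr (b - a) (z2 - a) < 0"
  proof -
    have "b - a = k * ((1 + Eb) - (-1 + Ea))" "z2 - a = k * (Z2 - (-1 + Ea))"
      using aE bE z2E by (simp_all add: algebra_simps)
    then show ?thesis using sc' ni2(2)[OF ImZ(2)] by simp
  qed
  have tc: "cr (b - a) (c - a) > 0"
  proof -
    have "b - a = k * ((1 + Eb) - (-1 + Ea))" "c - a = k * (\<i> - (-1 + Ea))"
      using aE bE by (simp_all add: c_def algebra_simps)
    then show ?thesis using sc ni1(5) by simp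
  qed
  define R where "R = subpath w 1 h +++ subpath 0 u h"
  have pR: "path R" "pathstart R = b" "pathfinish R = a"
    using hpath uw by (auto simp: R_def b_def a_def)
  have imR: "path_image R = h ` {w..1} \<union> h ` {0..u}"
    using hpath uw by (simp add: R_def path_image_join path_image_subpath)
  have farR: "\<delta> * cmod v / 2 \<le> cmod (y - p)" if "y \<in> path_image R" for y
  proof -
    from that imR obtain t where "t \<in> {w..1} \<union> {0..u}" "y = h t" by blast
    then show ?thesis using far[of t] uw by (auto simp: u_def w_def)
  qed
  have disj: "closed_segment z1 z2 \<inter> (path_image R \<union> closed_segment a c \<union> closed_segment c b) = {}"
  proof -
    have "closed_segment z1 z2 \<subseteq> cball p (\<delta> * cmod v / 10)"
      by (rule closed_segment_subset) (use z1 z2 in \<open>auto simp: dist_norm norm_minus_commute\<close>)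
    then have s: "cmod (y - p) \<le> \<delta> * cmod v / 10" if "y \<in> closed_segment z1 z2" for y
      using that by (auto simp: dist_norm norm_minus_commute)
    have pos: "\<delta> * cmod v > 0" using \<delta> nv by simp
    have ac: "cmod (y - p) > \<delta> * cmod v / 10" if "y \<in> closed_segment a c" for y
    proof -
      from that obtain l where l: "0 \<le> l" "l \<le> 1" "y = (1 - l) *\<^sub>R a + l *\<^sub>R c"
        unfolding closed_segment_def by blast
      have "y - p = k * ((1 - complex_of_real l) * (-1 + Ea) + complex_of_real l * \<i>)"
        using l(3) aE by (simp add: c_def scaleR_conv_of_real algebra_simps)
      then have "cmod (y - p) = \<delta> * cmod v * cmod ((1 - complex_of_real l) * (-1 + Ea) + complex_of_real l * \<i>)"
        by (simp add: norm_mult nk)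
      moreover have M: "cmod ((1 - complex_of_real l) * (-1 + Ea) + complex_of_real l * \<i>) > 1/10"
        using NI_seg(1)[of Ea l] nEa \<eta> l by simp
      ultimately have "cmod (y - p) > \<delta> * cmod v * (1/10)"
        using mult_strict_left_mono[OF M pos] by linarith
      then show ?thesis by simp
    qed
    have cb: "cmod (y - p) > \<delta> * cmod v / 10" if "y \<in> closed_segment c b" for y
    proof -
      from that obtain l where l: "0 \<le> l" "l \<le> 1" "y = (1 - l) *\<^sub>R c + l *\<^sub>R b"
        unfolding closed_segment_def by blast
      have "y - p = k * ((1 - complex_of_real l) * \<i> + complex_of_real l * (1 + Eb))"
        using l(3) bE by (simp add: c_def scaleR_conv_of_real algebra_simps)
      then have "cmod (y - p) = \<delta> * cmod v * cmod ((1 - complex_of_real l) * \<i> + complex_of_real l * (1 + Eb))"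
        by (simp add: norm_mult nk)
      moreover have M: "cmod ((1 - complex_of_real l) * \<i> + complex_of_real l * (1 + Eb)) > 1/10"
        using NI_seg(2)[of Eb l] nEb \<eta> l by simp
      ultimately have "cmod (y - p) > \<delta> * cmod v * (1/10)"
        using mult_strict_left_mono[OF M pos] by linarith
      then show ?thesis by simp
    qed
    show ?thesis using s ac cb farR pos by fastforce
  qed
  have key: "z \<notin> path_image h \<and> winding_number h z = winding_number (linepath a b +++ R) z"
    if zp: "cmod (z - p) \<le> \<delta> * cmod v / 10" and zc: "4 * \<eta> * \<delta> * (cmod v)^2 \<le> \<bar>cr v (z - p)\<bar>"
      and zab: "z \<notin> closed_segment a b" for z
  proof -
    have pos: "\<delta> * cmod v > 0" using \<delta> nv by simp
    have znot: "z \<notin> path_image h"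
    proof
      assume "z \<in> path_image h"
      then obtain t where t: "t \<in> {0..1}" "z = h t" unfolding path_image_def by auto
      show False
      proof (cases "\<delta> \<le> \<bar>t - 1/2\<bar>")
        case True then show False using far[OF t(1)] zp t(2) pos by simp
      next
        case False
        define x where "x = t - 1/2"
        have hx: "h t = h (1/2 + x)" by (simp add: x_def)
        define e where "e = h t - p - complex_of_real x * v"
        have ne: "cmod e \<le> \<eta> * cmod v * \<delta>"
        proof -
          have "cmod e \<le> \<eta> * cmod v * \<bar>x\<bar>" using approx[of x] False by (simp add: e_def x_def)
          also have "\<dots> \<le> \<eta> * cmod v * \<delta>" using False \<eta> by (intro mult_left_mono) (auto simp: x_def)
          finally show ?thesis .
        qed
        have "cr v (h t - z) = cr v e - cr v (z - p)"
          by (simp add: e_def cr_v_v cr_diff_right cr_add_right)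
        moreover have "\<bar>cr v e\<bar> \<le> cmod v * (\<eta> * cmod v * \<delta>)"
          using cr_bound[of v e] mult_left_mono[OF ne, of "cmod v"] by simp
        moreover have "cmod v * (\<eta> * cmod v * \<delta>) < 4 * \<eta> * \<delta> * (cmod v)^2"
          using \<eta> \<delta> nv by (simp add: power2_eq_square algebra_simps)
        moreover have "cr v (h t - z) = 0" using t(2) by (simp add: cr_def)
        ultimately show False using zc by linarith
      qed
    qed
    have Lsub: "winding_number (subpath u w h) z = winding_number (linepath a b) z"
    proof (rule winding_number_nearby_paths_eq)
      show "path (linepath a b)" by simp
      show "path (subpath u w h)" using hpath uw by simp
      show "pathstart (subpath u w h) = pathstart (linepath a b)" by (simp add: a_def)
      show "pathfinish (subpath u w h) = pathfinish (linepath a b)" by (simp add: b_def)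
      fix x :: real assume x: "x \<in> {0..1}"
      define X where "X = (2 * x - 1) * \<delta>"
      have aX: "\<bar>X\<bar> \<le> \<delta>"
      proof -
        have "\<bar>2 * x - 1\<bar> \<le> 1" using x by auto
        then have "\<bar>2 * x - 1\<bar> * \<delta> \<le> 1 * \<delta>" by (rule mult_right_mono) (use \<delta> in simp)
        then show ?thesis using \<delta> by (simp add: X_def abs_mult)
      qed
      have sx: "subpath u w h x = h (1/2 + X)" by (simp add: subpath_def u_def w_def X_def algebra_simps)
      define eh where "eh = h (1/2 + X) - p - complex_of_real X * v"
      have neh: "cmod eh \<le> \<eta> * cmod v * \<delta>"
      proof -
        have "cmod eh \<le> \<eta> * cmod v * \<bar>X\<bar>" using approx[OF aX] by (simp add: eh_def)
        also have "\<dots> \<le> \<eta> * cmod v * \<delta>" using aX \<eta> by (intro mult_left_mono) auto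
        finally show ?thesis .
      qed
      define eL where "eL = linepath a b x - p - complex_of_real X * v"
      have eLk: "eL = k * ((1 - complex_of_real x) * Ea + complex_of_real x * Eb)"
        by (simp add: eL_def linepath_def aE bE X_def k_def scaleR_conv_of_real algebra_simps)
      have neL: "cmod eL \<le> \<eta> * cmod v * \<delta>"
      proof -
        have "cmod ((1 - complex_of_real x) * Ea + complex_of_real x * Eb) \<le> (1 - x) * cmod Ea + x * cmod Eb"
          using x norm_triangle_ineq[of "(1 - complex_of_real x) * Ea" "complex_of_real x * Eb"]
          by (simp add: norm_mult) (metis abs_of_nonneg diff_ge_0_iff_ge norm_of_real of_real_1 of_real_diff)
        also have "\<dots> \<le> (1 - x) * \<eta> + x * \<eta>"
          using x nEa nEb by (intro add_mono mult_left_mono) auto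
        finally have M: "cmod ((1 - complex_of_real x) * Ea + complex_of_real x * Eb) \<le> \<eta>" by (simp add: algebra_simps)
        have "cmod eL = (\<delta> * cmod v) * cmod ((1 - complex_of_real x) * Ea + complex_of_real x * Eb)"
          unfolding eLk norm_mult nk ..
        also have "\<dots> \<le> (\<delta> * cmod v) * \<eta>" using mult_left_mono[OF M, of "\<delta> * cmod v"] pos by simp
        finally show ?thesis by (simp add: algebra_simps)
      qed
      have d1: "cmod (subpath u w h x - linepath a b x) \<le> 2 * \<eta> * cmod v * \<delta>"
      proof -
        have "subpath u w h x - linepath a b x = eh - eL" by (simp add: sx eh_def eL_def)
        then show ?thesis using norm_triangle_ineq4[of eh eL] neh neL by simp
      qed
      have "cr v (linepath a b x - z) = cr v eL - cr v (z - p)"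
        by (simp add: eL_def cr_def algebra_simps)
      moreover have "\<bar>cr v eL\<bar> \<le> cmod v * (\<eta> * cmod v * \<delta>)"
        using cr_bound[of v eL] mult_left_mono[OF neL, of "cmod v"] by simp
      ultimately have "\<bar>cr v (linepath a b x - z)\<bar> \<ge> 3 * \<eta> * \<delta> * (cmod v)^2"
        using zc by (simp add: power2_eq_square algebra_simps)
      then have "cmod v * cmod (linepath a b x - z) \<ge> cmod v * (3 * \<eta> * \<delta> * cmod v)"
        using cr_bound[of v "linepath a b x - z"] by (simp add: power2_eq_square algebra_simps)
      then have "cmod (linepath a b x - z) \<ge> 3 * \<eta> * \<delta> * cmod v" using nv by simp
      moreover have "2 * \<eta> * cmod v * \<delta> < 3 * \<eta> * \<delta> * cmod v" using \<eta> \<delta> nv by simp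
      ultimately show "cmod (subpath u w h x - linepath a b x) < cmod (linepath a b x - z)"
        using d1 by linarith
    qed
    have pimgs: "z \<notin> path_image (subpath 0 u h)" "z \<notin> path_image (subpath u w h)"
       "z \<notin> path_image (subpath w 1 h)" "z \<notin> path_image R"
    proof -
      have ss: "path_image (subpath x y h) \<subseteq> path_image h" if "x\<in>{0..1}" "y\<in>{0..1}" for x y
        using path_image_subpath_subset that by blast
      have "path_image R \<subseteq> path_image h"
        using ss[of w 1] ss[of 0 u] uw hpath by (auto simp: R_def path_image_join)
      then show "z \<notin> path_image (subpath 0 u h)" "z \<notin> path_image (subpath u w h)"
       "z \<notin> path_image (subpath w 1 h)" "z \<notin> path_image R"
        using ss[of 0 u] ss[of u w] ss[of w 1] uw znot by auto
    qed
    have "winding_number h z = winding_number (subpath 0 u h) z + winding_number (subpath u w h) z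
            + winding_number (subpath w 1 h) z"
      using winding_number_subpath_combine[OF hpath(1) znot, of 0 u w]
            winding_number_subpath_combine[OF hpath(1) znot, of 0 w 1] uw
      by simp
    also have "\<dots> = winding_number (linepath a b +++ R) z"
      using Lsub pimgs zab hpath uw
      by (simp add: R_def winding_number_join path_image_join a_def b_def)
    finally show ?thesis using znot by simp
  qed
  have z1ab: "z1 \<notin> closed_segment a b" using t1(1) not_on_segment_cr by (metis less_irrefl)
  have z2ab: "z2 \<notin> closed_segment a b" using t2 not_on_segment_cr by (metis less_irrefl)
  have k1: "z1 \<notin> path_image h \<and> winding_number h z1 = winding_number (linepath a b +++ R) z1"
    using key[OF z1(1) _ z1ab] z1(2) by simp
  have k2: "z2 \<notin> path_image h \<and> winding_number h z2 = winding_number (linepath a b +++ R) z2"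
    using key[OF z2(1) _ z2ab] z2(2) by simp
  show ?thesis
    using k1 k2 seg_jump[OF pR disj t1 t2 tc] by simp
qed

lemma per_nat: fixes h :: "real \<Rightarrow> 'a" shows "(\<And>t. h (t + 1) = h t) \<Longrightarrow> h (t + real n) = h t"
proof (induction n arbitrary: t)
  case 0 then show ?case by simp
next
  case (Suc n)
  have "h (t + real (Suc n)) = h ((t + real n) + 1)" by (simp add: algebra_simps)
  also have "\<dots> = h (t + real n)" using Suc.prems by simp
  finally show ?case using Suc by simp
qed

lemma per_int: fixes h :: "real \<Rightarrow> 'a" shows "(\<And>t. h (t + 1) = h t) \<Longrightarrow> h (t + real_of_int m) = h t"
proof (cases "m \<ge> 0")
  case True
  assume p: "\<And>t. h (t + 1) = h t"
  then show ?thesis using per_nat[of h, OF p, of t "nat m"] True by simp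
next
  case False
  assume p: "\<And>t. h (t + 1) = h t"
  have "h (t + real_of_int m) = h ((t + real_of_int m) + real (nat (- m)))"
    using per_nat[of h, OF p] by simp
  also have "(t + real_of_int m) + real (nat (- m)) = t" using False by simp
  finally show ?thesis .
qed

lemma per_image:
  fixes h :: "real \<Rightarrow> 'a" and a :: real
  assumes "\<And>t. h (t + 1) = h t"
  shows "h ` {a..a+1} = range h"
proof
  show "range h \<subseteq> h ` {a..a+1}"
  proof
    fix y assume "y \<in> range h"
    then obtain t where t: "y = h t" by auto
    define m where "m = \<lfloor>t - a\<rfloor>"
    have "h t = h ((t - real_of_int m) + real_of_int m)" by simp
    also have "\<dots> = h (t - real_of_int m)" by (rule per_int[of h, OF assms])
    finally have "y = h (t - real_of_int m)" using t by simp
    moreover have "t - real_of_int m \<in> {a..a+1}"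
      unfolding m_def using floor_le_iff[of "t - a"] le_floor_iff[of _ "t - a"]
      by (auto simp: algebra_simps) linarith+
    ultimately show "y \<in> h ` {a..a+1}" by blast
  qed
qed auto

lemma shift_winding:
  assumes per: "\<And>t. h (t + 1) = h t" and hc: "continuous_on UNIV h"
    and z: "z \<notin> range h"
  shows "winding_number (\<lambda>x. h (x + r)) z = winding_number h z"
proof -
  define a where "a = r - real_of_int \<lfloor>r\<rfloor>"
  have a: "a \<in> {0..1}" unfolding a_def using floor_correct[of r] by (simp add: algebra_simps)
  have ph: "path h" using hc continuous_on_subset[OF hc] by (simp add: path_def)
  have pimg: "path_image h = range h" using per_image[of h, OF per, of 0] by (simp add: path_image_def)
  have "shiftpath a h = (\<lambda>x. h (x + r))"
  proof
    fix x
    have e1: "h (a + x) = h (x + r)"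
      using per_int[of h, OF per, of "x + r" "- \<lfloor>r\<rfloor>"] by (simp add: a_def algebra_simps)
    have e2: "h (a + x - 1) = h (a + x)" using per[of "a + x - 1"] by simp
    show "shiftpath a h x = h (x + r)" unfolding shiftpath_def using e1 e2 by simp
  qed
  moreover have "winding_number (shiftpath a h) z = winding_number h z"
    by (rule winding_number_shiftpath) (use ph z pimg a per[of 0] in \<open>auto simp: pathstart_def pathfinish_def\<close>)
  ultimately show ?thesis by simp
qed

lemma mvt_approx:
  fixes h h' :: "real \<Rightarrow> complex"
  assumes hder: "\<And>t. (h has_vector_derivative h' t) (at t)"
    and bnd: "\<And>y. \<bar>y\<bar> \<le> \<delta> \<Longrightarrow> cmod (h' (t0 + y) - v) \<le> B"
    and x: "\<bar>x\<bar> \<le> \<delta>"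
  shows "cmod (h (t0 + x) - h t0 - complex_of_real x * v) \<le> B * \<bar>x\<bar>"
proof -
  define f where "f = (\<lambda>y. h (t0 + y) - complex_of_real y * v)"
  have fd: "(f has_derivative (\<lambda>d. d *\<^sub>R (h' (t0 + y) - v))) (at y within {-\<delta>..\<delta>})" for y
  proof -
    have "((\<lambda>y. t0 + y) has_vector_derivative 0 + 1) (at y)"
      by (intro has_vector_derivative_add has_vector_derivative_const has_vector_derivative_id)
    then have "((\<lambda>y. h (t0 + y)) has_vector_derivative h' (t0 + y)) (at y)"
      using vector_diff_chain_at[of "\<lambda>y. t0 + y" 1 y h "h' (t0 + y)"] hder
      by (simp add: o_def)
    moreover have "((\<lambda>y. complex_of_real y * v) has_vector_derivative v) (at y)"
      by (auto intro!: derivative_eq_intros simp: has_vector_derivative_def scaleR_conv_of_real)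
    ultimately have "(f has_vector_derivative (h' (t0 + y) - v)) (at y)"
      unfolding f_def by (rule has_vector_derivative_diff)
    then show ?thesis unfolding has_vector_derivative_def by (rule has_derivative_at_withinI)
  qed
  have "cmod (f x - f 0) \<le> B * norm (x - 0)"
  proof (rule differentiable_bound[OF convex_closed_interval fd])
    fix y :: real assume y: "y \<in> {-\<delta>..\<delta>}"
    have "onorm (\<lambda>d. d *\<^sub>R (h' (t0 + y) - v)) = onorm (\<lambda>d::real. d) * cmod (h' (t0 + y) - v)"
      using onorm_scaleR_left[of "\<lambda>d::real. d" "h' (t0 + y) - v"] by (simp add: bounded_linear_ident)
    also have "onorm (\<lambda>d::real. d) = 1" using onorm_id by (simp add: id_def)
    finally show "onorm (\<lambda>d. d *\<^sub>R (h' (t0 + y) - v)) \<le> B" using bnd[of y] y by (simp add: abs_le_iff)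
  next
    show "x \<in> {-\<delta>..\<delta>}" "0 \<in> {-\<delta>..\<delta>}" using x by auto
  qed
  then show ?thesis by (simp add: f_def algebra_simps)
qed

lemma hl1: fixes X Y K :: real shows "\<bar>X - Y\<bar> \<le> Y / 2 \<Longrightarrow> K \<le> Y / 2 \<Longrightarrow> K \<le> X"
  by (auto simp: abs_if split: if_splits)

lemma hl2: fixes X Y K :: real shows "\<bar>X + Y\<bar> \<le> Y / 2 \<Longrightarrow> K \<le> Y / 2 \<Longrightarrow> X \<le> - K"
  by (auto simp: abs_if split: if_splits)

lemma jump:
  fixes g h h' :: "real \<Rightarrow> complex" and w :: complex
  assumes per: "\<And>t. h (t + 1) = h t"
    and hder: "\<And>t. (h has_vector_derivative h' t) (at t)" and hc: "continuous_on UNIV h'"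
    and gder: "(g has_vector_derivative w) (at s0)"
    and cross: "g s0 = h t0" and uniq: "\<And>t. h t = h t0 \<Longrightarrow> t - t0 \<in> \<int>"
    and c0: "cr (h' t0) w \<noteq> 0" and e: "e > 0"
  obtains \<epsilon> where "0 < \<epsilon>" "\<epsilon> < e" "g (s0 + \<epsilon>) \<notin> range h" "g (s0 - \<epsilon>) \<notin> range h"
     "winding_number h (g (s0 + \<epsilon>)) - winding_number h (g (s0 - \<epsilon>)) = complex_of_real (sgn (cr (h' t0) w))"
proof -
  define v where "v = h' t0"
  define p where "p = h t0"
  have v0: "v \<noteq> 0" and w0: "w \<noteq> 0" using c0 by (auto simp: v_def cr_def)
  have nv: "cmod v > 0" and nw: "cmod w > 0" using v0 w0 by auto
  define C where "C = \<bar>cr v w\<bar>"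
  have C0: "C > 0" using c0 by (simp add: C_def v_def)
  have Cle: "C \<le> cmod v * cmod w" using cr_bound[of v w] by (simp add: C_def)
  define \<eta> where "\<eta> = C / (200 * cmod v * cmod w)"
  define \<theta> where "\<theta> = C / (2 * cmod v * cmod w)"
  have \<eta>: "0 < \<eta>" "\<eta> \<le> 1/100" using C0 nv nw Cle by (auto simp: \<eta>_def divide_le_eq)
  have \<theta>: "0 < \<theta>" "\<theta> \<le> 1/2" using C0 nv nw Cle by (auto simp: \<theta>_def divide_le_eq)
  have hcont: "continuous_on UNIV h"
    using hder by (meson continuous_at_imp_continuous_on has_vector_derivative_continuous)
  have "isCont h' t0" using hc by (simp add: continuous_on_eq_continuous_at)
  then have "\<forall>\<epsilon>>0. \<exists>d>0. \<forall>t. dist t t0 < d \<longrightarrow> dist (h' t) v < \<epsilon>"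
    unfolding continuous_at_eps_delta v_def .
  moreover have "\<eta> * cmod v > 0" using \<eta> nv by simp
  ultimately obtain \<delta>1 where \<delta>1: "\<delta>1 > 0" "\<And>t. dist t t0 < \<delta>1 \<Longrightarrow> dist (h' t) v < \<eta> * cmod v"
    by blast
  have approx0: "cmod (h (t0 + x) - p - complex_of_real x * v) \<le> (\<eta> * cmod v) * \<bar>x\<bar>"
    if "\<bar>x\<bar> \<le> \<delta>1 / 2" for x
  proof -
    have "cmod (h (t0 + x) - h t0 - complex_of_real x * v) \<le> (\<eta> * cmod v) * \<bar>x\<bar>"
    proof (rule mvt_approx[OF hder _ that])
      fix y :: real assume "\<bar>y\<bar> \<le> \<delta>1 / 2"
      then have "dist (t0 + y) t0 < \<delta>1" using \<delta>1 by (simp add: dist_norm)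
      then show "cmod (h' (t0 + y) - v) \<le> \<eta> * cmod v" using \<delta>1(2) by (simp add: dist_norm less_imp_le)
    qed
    then show ?thesis by (simp add: p_def)
  qed
  define hr where "hr = (\<lambda>x. h (x + (t0 - 1/2)))"
  have perr: "\<And>t. hr (t + 1) = hr t"
  proof -
    fix t
    have e: "t + 1 + (t0 - 1/2) = (t + (t0 - 1/2)) + 1" by simp
    show "hr (t + 1) = hr t" unfolding hr_def e by (rule per)
  qed
  have hrc: "continuous_on UNIV hr" unfolding hr_def
    by (intro continuous_on_compose2[OF hcont]) (auto intro!: continuous_intros)
  have phr: "path hr" using continuous_on_subset[OF hrc] by (simp add: path_def)
  have hr01: "hr 1 = hr 0" using perr[of 0] by simp
  have hrp: "hr (1/2) = p" by (simp add: hr_def p_def)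
  have rng: "range hr = range h"
  proof
    show "range hr \<subseteq> range h" by (auto simp: hr_def)
    show "range h \<subseteq> range hr"
    proof
      fix y assume "y \<in> range h"
      then obtain t where "y = h t" by auto
      then have "y = hr (t - (t0 - 1/2))" by (simp add: hr_def)
      then show "y \<in> range hr" by blast
    qed
  qed
  have pimg: "path_image hr = range h"
    using per_image[of hr, OF perr, of 0] rng by (simp add: path_image_def)
  define \<delta>2 where "\<delta>2 = min (\<delta>1 / 2) (1/4)"
  have \<delta>2: "0 < \<delta>2" "\<delta>2 \<le> \<delta>1 / 2" "\<delta>2 \<le> 1/4" using \<delta>1 by (auto simp: \<delta>2_def)
  define K where "K = {0..1/2 - \<delta>2} \<union> {1/2 + \<delta>2..1}"
  have Kc: "compact K" by (simp add: K_def compact_Un)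
  have Kne: "K \<noteq> {}" using \<delta>2 by (auto simp: K_def intro!: exI[of _ 0])
  have Kcont: "continuous_on K (\<lambda>t. cmod (hr t - p))"
    by (intro continuous_intros continuous_on_subset[OF hrc]) auto
  obtain t1 where t1: "t1 \<in> K" "\<And>t. t \<in> K \<Longrightarrow> cmod (hr t1 - p) \<le> cmod (hr t - p)"
    using continuous_attains_inf[OF Kc Kne Kcont] by blast
  define r0 where "r0 = cmod (hr t1 - p)"
  have r0: "r0 > 0"
  proof (rule ccontr)
    assume "\<not> r0 > 0"
    then have "hr t1 = p" by (simp add: r0_def)
    then have "h (t1 + (t0 - 1/2)) = h t0" by (simp add: hr_def p_def)
    then have "t1 + (t0 - 1/2) - t0 \<in> \<int>" by (rule uniq)
    then obtain n :: int where n: "t1 - 1/2 = of_int n" by (auto elim!: Ints_cases)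
    have "t1 \<in> {0..1}" "\<bar>t1 - 1/2\<bar> \<ge> \<delta>2" using t1(1) \<delta>2 by (auto simp: K_def)
    then have "-1 < real_of_int n" "real_of_int n < 1" using n by auto
    then have "-1 < n" "n < 1" by linarith+
    then have "n = 0" by simp
    then show False using n \<open>\<bar>t1 - 1/2\<bar> \<ge> \<delta>2\<close> \<delta>2 by simp
  qed
  obtain \<epsilon>0 where \<epsilon>0: "\<epsilon>0 > 0"
    "\<And>y. norm (y - s0) < \<epsilon>0 \<Longrightarrow> cmod (g y - g s0 - (y - s0) *\<^sub>R w) \<le> (\<theta> * cmod w) * norm (y - s0)"
    using gder \<theta> nw unfolding has_vector_derivative_def has_derivative_at_alt
    by (metis mult_pos_pos)
  define \<delta> where "\<delta> = min \<delta>2 (min (r0 / cmod v) (10 * cmod w * min \<epsilon>0 e / cmod v))"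
  have \<delta>: "0 < \<delta>" "\<delta> \<le> \<delta>2" "\<delta> \<le> r0 / cmod v" "\<delta> \<le> 10 * cmod w * min \<epsilon>0 e / cmod v"
    using \<delta>2 r0 nv nw \<epsilon>0 e by (auto simp: \<delta>_def)
  define \<epsilon> where "\<epsilon> = \<delta> * cmod v / (20 * cmod w)"
  have \<epsilon>: "0 < \<epsilon>" "\<epsilon> < \<epsilon>0" "\<epsilon> < e"
  proof -
    show "0 < \<epsilon>" using \<delta> nv nw by (simp add: \<epsilon>_def)
    have "\<delta> * cmod v \<le> 10 * cmod w * min \<epsilon>0 e" using \<delta>(4) nv by (simp add: le_divide_eq)
    then have "\<epsilon> \<le> (10 * cmod w * min \<epsilon>0 e) / (20 * cmod w)"
      unfolding \<epsilon>_def by (rule divide_right_mono) (use nw in auto)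
    also have "\<dots> = min \<epsilon>0 e / 2" using nw by simp
    finally have "\<epsilon> \<le> min \<epsilon>0 e / 2" .
    then show "\<epsilon> < \<epsilon>0" "\<epsilon> < e" using \<epsilon>0 e by auto
  qed
  have far: "\<delta> * cmod v / 2 \<le> cmod (hr t - p)" if t: "t \<in> {0..1}" "\<delta> \<le> \<bar>t - 1/2\<bar>" for t
  proof (cases "\<delta>2 \<le> \<bar>t - 1/2\<bar>")
    case True
    then have "t \<in> K" using t by (auto simp: K_def)
    then have "r0 \<le> cmod (hr t - p)" using t1(2) by (simp add: r0_def)
    moreover have "\<delta> * cmod v \<le> r0" using \<delta>(3) nv by (simp add: le_divide_eq)
    moreover have "\<delta> * cmod v > 0" using \<delta> nv by simp
    ultimately show ?thesis by linarith
  next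
    case False
    define x where "x = t - 1/2"
    have hx: "hr t = h (t0 + x)" by (simp add: hr_def x_def algebra_simps)
    have ax: "\<bar>x\<bar> \<le> \<delta>1 / 2" using False \<delta>2 by (simp add: x_def)
    have "cmod (complex_of_real x * v) \<le> cmod (hr t - p) + cmod (h (t0 + x) - p - complex_of_real x * v)"
      using norm_triangle_ineq4[of "hr t - p" "h (t0 + x) - p - complex_of_real x * v"] hx by simp
    then have "\<bar>x\<bar> * cmod v \<le> cmod (hr t - p) + (\<eta> * cmod v) * \<bar>x\<bar>"
      using approx0[OF ax] by (simp add: norm_mult)
    moreover have "\<eta> * (\<bar>x\<bar> * cmod v) \<le> (1/2) * (\<bar>x\<bar> * cmod v)"
      by (rule mult_right_mono) (use \<eta> in auto)
    moreover have "(\<eta> * cmod v) * \<bar>x\<bar> = \<eta> * (\<bar>x\<bar> * cmod v)" by (simp only: ac_simps)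
    moreover have "\<delta> * cmod v \<le> \<bar>x\<bar> * cmod v" using t(2) nv by (simp add: x_def)
    ultimately show ?thesis by linarith
  qed
  have approx: "cmod (hr (1/2 + x) - p - complex_of_real x * v) \<le> \<eta> * cmod v * \<bar>x\<bar>"
    if "\<bar>x\<bar> \<le> \<delta>" for x
  proof -
    have "hr (1/2 + x) = h (t0 + x)" by (simp add: hr_def algebra_simps)
    then show ?thesis using approx0[of x] that \<delta> \<delta>2 by simp
  qed
  define \<sigma> where "\<sigma> = sgn (cr v w)"
  have \<sigma>: "\<sigma> = 1 \<or> \<sigma> = -1" "\<sigma> * cr v w = C" "\<bar>\<sigma>\<bar> = 1"
    using c0 by (auto simp: \<sigma>_def C_def v_def sgn_if)
  have pt: "cmod (g (s0 + \<tau> * \<sigma> * \<epsilon>) - p) \<le> \<delta> * cmod v / 10 \<and>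
            \<bar>cr v (g (s0 + \<tau> * \<sigma> * \<epsilon>) - p) - \<tau> * (C * \<epsilon>)\<bar> \<le> C * \<epsilon> / 2"
    if \<tau>: "\<bar>\<tau>\<bar> = 1" for \<tau>
  proof -
    define y where "y = s0 + \<tau> * \<sigma> * \<epsilon>"
    have ay: "norm (y - s0) = \<epsilon>" using \<tau> \<sigma>(3) \<epsilon> by (simp add: y_def abs_mult)
    define err where "err = g y - g s0 - (y - s0) *\<^sub>R w"
    have nerr: "cmod err \<le> \<theta> * cmod w * \<epsilon>" using \<epsilon>0(2)[of y] ay \<epsilon> by (simp add: err_def)
    have zeta: "g y - p = complex_of_real (\<tau> * \<sigma> * \<epsilon>) * w + err"
      by (simp add: err_def y_def cross p_def scaleR_conv_of_real)
    have "cmod (g y - p) \<le> cmod (complex_of_real (\<tau> * \<sigma> * \<epsilon>) * w) + cmod err"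
      unfolding zeta by (rule norm_triangle_ineq)
    also have "cmod (complex_of_real (\<tau> * \<sigma> * \<epsilon>) * w) = \<epsilon> * cmod w"
      using \<tau> \<sigma>(3) \<epsilon> by (simp add: norm_mult abs_mult)
    finally have "cmod (g y - p) \<le> \<epsilon> * cmod w + \<theta> * cmod w * \<epsilon>" using nerr by simp
    also have "\<dots> \<le> \<epsilon> * cmod w + (1/2) * cmod w * \<epsilon>"
      using \<theta> nw \<epsilon> by (intro add_left_mono mult_right_mono) auto
    also have "\<dots> = (3/40) * (\<delta> * cmod v)" using nw by (simp add: \<epsilon>_def field_simps)
    also have "\<dots> \<le> \<delta> * cmod v / 10" using \<delta> nv by simp
    finally have n1: "cmod (g y - p) \<le> \<delta> * cmod v / 10" .
    have "cr v (g y - p) = \<tau> * \<epsilon> * (\<sigma> * cr v w) + cr v err"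
      unfolding zeta by (simp add: cr_def algebra_simps)
    also have "\<sigma> * cr v w = C" by (rule \<sigma>(2))
    finally have ce: "cr v (g y - p) - \<tau> * (C * \<epsilon>) = cr v err" by (simp add: algebra_simps)
    have "\<bar>cr v err\<bar> \<le> cmod v * (\<theta> * cmod w * \<epsilon>)"
      using cr_bound[of v err] mult_left_mono[OF nerr, of "cmod v"] by simp
    also have "cmod v * (\<theta> * cmod w * \<epsilon>) = C * \<epsilon> / 2"
      using nv nw by (simp add: \<theta>_def field_simps)
    finally show ?thesis using n1 ce by (simp add: y_def)
  qed
  define z1 where "z1 = g (s0 + 1 * \<sigma> * \<epsilon>)"
  define z2 where "z2 = g (s0 + (-1) * \<sigma> * \<epsilon>)"
  have key: "4 * \<eta> * \<delta> * (cmod v)^2 \<le> C * \<epsilon> / 2"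
  proof -
    have "4 * \<eta> * \<delta> * (cmod v)^2 = C * \<delta> * cmod v / (50 * cmod w)"
      using nv nw by (simp add: \<eta>_def power2_eq_square field_simps)
    also have "\<dots> \<le> C * \<delta> * cmod v / (40 * cmod w)"
      using C0 \<delta> nv nw by (intro divide_left_mono mult_pos_pos) auto
    also have "\<dots> = C * \<epsilon> / 2" using nw by (simp add: \<epsilon>_def field_simps)
    finally show ?thesis .
  qed
  have z1p: "cmod (z1 - p) \<le> \<delta> * cmod v / 10" "4 * \<eta> * \<delta> * (cmod v)^2 \<le> cr v (z1 - p)"
  proof -
    have a: "cmod (z1 - p) \<le> \<delta> * cmod v / 10" "\<bar>cr v (z1 - p) - 1 * (C * \<epsilon>)\<bar> \<le> C * \<epsilon> / 2"
      using pt[of 1] unfolding z1_def by auto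
    show "cmod (z1 - p) \<le> \<delta> * cmod v / 10" by (rule a(1))
    show "4 * \<eta> * \<delta> * (cmod v)^2 \<le> cr v (z1 - p)"
      by (rule hl1[OF _ key]) (use a(2) in simp)
  qed
  have z2p: "cmod (z2 - p) \<le> \<delta> * cmod v / 10" "cr v (z2 - p) \<le> - 4 * \<eta> * \<delta> * (cmod v)^2"
  proof -
    have a: "cmod (z2 - p) \<le> \<delta> * cmod v / 10" "\<bar>cr v (z2 - p) - (-1) * (C * \<epsilon>)\<bar> \<le> C * \<epsilon> / 2"
      using pt[of "-1"] unfolding z2_def by auto
    show "cmod (z2 - p) \<le> \<delta> * cmod v / 10" by (rule a(1))
    show "cr v (z2 - p) \<le> - 4 * \<eta> * \<delta> * (cmod v)^2"
      using hl2[OF _ key, of "cr v (z2 - p)"] a(2) by simp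
  qed
  have J: "z1 \<notin> path_image hr \<and> z2 \<notin> path_image hr \<and> winding_number hr z1 - winding_number hr z2 = 1"
    by (rule jump_normalized[OF phr hr01 hrp[symmetric] v0 \<delta>(1) _ \<eta> approx far z1p z2p])
       (use \<delta> \<delta>2 in simp)
  have W: "winding_number hr z = winding_number h z" if "z \<notin> range h" for z
    unfolding hr_def by (rule shift_winding[OF per hcont that])
  have z12: "z1 \<notin> range h" "z2 \<notin> range h" using J pimg by auto
  have J2: "winding_number h z1 - winding_number h z2 = 1" using J W z12 by simp
  show ?thesis
  proof (cases "\<sigma> = 1")
    case True
    then have "z1 = g (s0 + \<epsilon>)" "z2 = g (s0 - \<epsilon>)" by (simp_all add: z1_def z2_def)
    then show ?thesis using that[OF \<epsilon>(1) \<epsilon>(3)] z12 J2 True by (simp add: \<sigma>_def v_def)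
  next
    case False
    then have F: "\<sigma> = -1" using \<sigma>(1) by simp
    then have "z1 = g (s0 - \<epsilon>)" "z2 = g (s0 + \<epsilon>)" by (simp_all add: z1_def z2_def)
    moreover have "winding_number h z2 - winding_number h z1 = complex_of_real \<sigma>" using J2 F minus_diff_eq[of "winding_number h z1" "winding_number h z2"] by simp
    ultimately show ?thesis using that[OF \<epsilon>(1) \<epsilon>(3)] z12 by (simp add: \<sigma>_def v_def)
  qed
qed

lemma zero_case:
  fixes F :: "real \<Rightarrow> complex"
  assumes LC: "\<And>y. \<not> P y \<Longrightarrow> \<exists>d>0. \<forall>u. \<bar>u - y\<bar> < d \<longrightarrow> \<not> P u \<and> F u = F y"
    and E: "{s\<in>{a..b}. P s} = {}" and ab: "a \<le> b"
  shows "F a = F b"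
proof -
  have "F constant_on {a..b}"
  proof (rule locally_constant_imp_constant)
    show "connected {a..b}" by simp
    fix y assume y: "y \<in> {a..b}"
    have nP: "\<not> P y"
    proof
      assume "P y"
      then have "y \<in> {s\<in>{a..b}. P s}" using y by simp
      then show False using E by (metis empty_iff)
    qed
    obtain d where d0: "d > 0" "\<forall>u. \<bar>u - y\<bar> < d \<longrightarrow> \<not> P u \<and> F u = F y"
      using LC[OF nP] by metis
    have d: "d > 0" "\<And>u. \<bar>u - y\<bar> < d \<Longrightarrow> F u = F y" using d0 by blast+
    show "\<exists>T. openin (top_of_set {a..b}) T \<and> y \<in> T \<and> (\<forall>x\<in>T. F x = F y)"
    proof (intro exI conjI)
      show "openin (top_of_set {a..b}) ({a..b} \<inter> ball y d)" by (rule openin_open_Int) simp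
      show "y \<in> {a..b} \<inter> ball y d" using y d(1) by simp
      show "\<forall>x\<in>{a..b} \<inter> ball y d. F x = F y"
      proof
        fix x assume "x \<in> {a..b} \<inter> ball y d"
        then have "\<bar>x - y\<bar> < d" by (auto simp: dist_real_def abs_minus_commute)
        then show "F x = F y" by (rule d(2))
      qed
    qed
  qed
  then show ?thesis using ab unfolding constant_on_def by auto
qed

lemma sum_jumps:
  fixes F J :: "real \<Rightarrow> complex"
  assumes LC: "\<And>y. \<not> P y \<Longrightarrow> \<exists>d>0. \<forall>u. \<bar>u - y\<bar> < d \<longrightarrow> \<not> P u \<and> F u = F y"
    and fin: "\<And>a b. finite {s\<in>{a..b}. P s}"
    and JP: "\<And>s0 e. P s0 \<Longrightarrow> e > 0 \<Longrightarrow> \<exists>\<epsilon>. 0 < \<epsilon> \<and> \<epsilon> < e \<and> \<not> P (s0 + \<epsilon>) \<and> \<not> P (s0 - \<epsilon>)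
                     \<and> F (s0 + \<epsilon>) - F (s0 - \<epsilon>) = J s0"
  shows "a \<le> b \<Longrightarrow> \<not> P a \<Longrightarrow> \<not> P b \<Longrightarrow> F b - F a = (\<Sum>s\<in>{s\<in>{a..b}. P s}. J s)"
proof (induction "card {s\<in>{a..b}. P s}" arbitrary: a rule: less_induct)
  case less
  define S where "S = {s\<in>{a..b}. P s}"
  have finS: "finite S" using fin by (simp add: S_def)
  show ?case
  proof (cases "S = {}")
    case True
    have E0: "{s\<in>{a..b}. P s} = {}" using True unfolding S_def .
    have "F a = F b" by (rule zero_case[where P=P and F=F, OF LC E0 less.prems(1)])
    then show ?thesis using True unfolding S_def[symmetric] by simp
  next
    case False
    define s0 where "s0 = Min S"
    have s0S: "s0 \<in> S" using finS False by (simp add: s0_def)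
    have s0min: "\<And>s. s \<in> S \<Longrightarrow> s0 \<le> s" using finS by (simp add: s0_def)
    have as0: "a < s0" "s0 < b" using s0S less.prems
      by (auto simp: S_def) (metis order_le_less)+
    define D where "D = {s0 - a, b - s0} \<union> (\<lambda>e. e - s0) ` (S - {s0})"
    have finD: "finite D" "D \<noteq> {}" using finS by (auto simp: D_def)
    have Dpos: "\<And>x. x \<in> D \<Longrightarrow> x > 0"
      using as0 s0min by (force simp: D_def)
    define \<delta>0 where "\<delta>0 = Min D / 2"
    have \<delta>0: "\<delta>0 > 0" using finD Dpos by (simp add: \<delta>0_def)
    have \<delta>0le: "\<And>x. x \<in> D \<Longrightarrow> 2 * \<delta>0 \<le> x" using finD by (simp add: \<delta>0_def)
    obtain \<epsilon> where \<epsilon>: "0 < \<epsilon>" "\<epsilon> < \<delta>0" "\<not> P (s0 + \<epsilon>)" "\<not> P (s0 - \<epsilon>)"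
        "F (s0 + \<epsilon>) - F (s0 - \<epsilon>) = J s0"
      using JP[of s0 \<delta>0] s0S \<delta>0 by (auto simp: S_def)
    have e1: "s0 - a \<in> D" "b - s0 \<in> D" by (auto simp: D_def)
    have lo: "a \<le> s0 - \<epsilon>" and hi: "s0 + \<epsilon> \<le> b"
      using \<delta>0le[OF e1(1)] \<delta>0le[OF e1(2)] \<epsilon> by linarith+
    have left: "F a = F (s0 - \<epsilon>)"
    proof (rule zero_case[where P=P and F=F, OF LC _ lo])
      show "{s \<in> {a..s0 - \<epsilon>}. P s} = {}"
      proof (rule ccontr)
        assume "{s \<in> {a..s0 - \<epsilon>}. P s} \<noteq> {}"
        then obtain s where "s \<in> {a..s0 - \<epsilon>}" "P s" by auto
        then have "s \<in> S" using hi \<epsilon> by (auto simp: S_def)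
        then show False using s0min \<open>s \<in> {a..s0 - \<epsilon>}\<close> \<epsilon> by fastforce
      qed
    qed
    have S': "{s\<in>{s0 + \<epsilon>..b}. P s} = S - {s0}"
    proof
      show "{s\<in>{s0 + \<epsilon>..b}. P s} \<subseteq> S - {s0}" using as0 \<epsilon> by (auto simp: S_def)
      show "S - {s0} \<subseteq> {s\<in>{s0 + \<epsilon>..b}. P s}"
      proof
        fix s assume s: "s \<in> S - {s0}"
        then have "s - s0 \<in> D" by (auto simp: D_def)
        then have "2 * \<delta>0 \<le> s - s0" by (rule \<delta>0le)
        then show "s \<in> {s\<in>{s0 + \<epsilon>..b}. P s}" using s \<epsilon> by (auto simp: S_def)
      qed
    qed
    have c0: "card S > 0" using finS s0S by (auto simp: card_gt_0_iff)
    have card: "card {s\<in>{s0 + \<epsilon>..b}. P s} < card {s\<in>{a..b}. P s}"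
      unfolding S' S_def[symmetric] using finS s0S card_gt_0_iff[of S] c0 by (simp add: card_Diff1_less)
    have IH: "F b - F (s0 + \<epsilon>) = (\<Sum>s\<in>{s\<in>{s0 + \<epsilon>..b}. P s}. J s)"
      by (rule less.hyps[OF card hi \<epsilon>(3) less.prems(3)])
    have "(\<Sum>s\<in>S. J s) = J s0 + (\<Sum>s\<in>S - {s0}. J s)"
      using finS s0S by (simp add: sum.remove)
    moreover have "F b - F a = (F b - F (s0 + \<epsilon>)) + (F (s0 + \<epsilon>) - F (s0 - \<epsilon>))"
      using left by simp
    moreover have "F b - F (s0 + \<epsilon>) = (\<Sum>s\<in>S - {s0}. J s)" using IH S' by simp
    ultimately have "F b - F a = (\<Sum>s\<in>S. J s)" using \<epsilon>(5) by (simp only: add.commute)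
    then show ?thesis by (simp add: S_def)
  qed
qed

lemma deriv_per:
  fixes g g' :: "real \<Rightarrow> complex"
  assumes gper: "\<And>t. g (t + 1) = g t" and gder: "\<And>t. (g has_vector_derivative g' t) (at t)"
  shows "g' (t + 1) = g' t"
proof -
  have "((\<lambda>x. x + 1) has_vector_derivative 1 + 0) (at t)"
    by (intro has_vector_derivative_add has_vector_derivative_const has_vector_derivative_id)
  then have "((\<lambda>x. g (x + 1)) has_vector_derivative g' (t + 1)) (at t)"
    using vector_diff_chain_at[of "\<lambda>x. x + 1" 1 t g "g' (t + 1)"] gder by (simp add: o_def)
  then have "(g has_vector_derivative g' (t + 1)) (at t)" using gper by simp
  then show ?thesis using vector_derivative_unique_at[OF gder[of t]] by simp
qed

lemma ints_close_eq:
  fixes a b :: complex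
  assumes "a \<in> \<int>" "b \<in> \<int>" "cmod (a - b) < 1" shows "a = b"
proof -
  obtain m n :: int where "a = of_int m" "b = of_int n" using assms(1,2) by (auto elim!: Ints_cases)
  then have "\<bar>real_of_int (m - n)\<bar> < 1" using assms(3)
    by (metis norm_of_int of_int_diff)
  then have "m = n" by linarith
  then show ?thesis using \<open>a = of_int m\<close> \<open>b = of_int n\<close> by simp
qed

lemma intersection_zero:
  fixes g h g' h' :: "real \<Rightarrow> complex" and X :: "real set" and \<tau> :: "real \<Rightarrow> real"
  assumes gper: "\<And>t. g (t + 1) = g t" and hper: "\<And>t. h (t + 1) = h t"
    and gder: "\<And>t. (g has_vector_derivative g' t) (at t)"
    and hder: "\<And>t. (h has_vector_derivative h' t) (at t)" and hc: "continuous_on UNIV h'"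
    and X: "finite X" "X \<subseteq> {0..<1}"
    and char: "\<And>s t. s \<in> {0..<1} \<Longrightarrow> t \<in> {0..<1} \<Longrightarrow> g s = h t \<longleftrightarrow> (s \<in> X \<and> t = \<tau> s)"
    and \<tau>: "\<And>s. s \<in> X \<Longrightarrow> \<tau> s \<in> {0..<1}"
    and trans: "\<And>s. s \<in> X \<Longrightarrow> cr (h' (\<tau> s)) (g' s) \<noteq> 0"
  shows "(\<Sum>s\<in>X. sgn (cr (h' (\<tau> s)) (g' s))) = 0"
proof (cases "X = {}")
  case True then show ?thesis by simp
next
  case False
  define fr where "fr = (\<lambda>s::real. s - real_of_int \<lfloor>s\<rfloor>)"
  have fr01: "fr s \<in> {0..<1}" for s unfolding fr_def by (simp add: frac_lt_1 floor_le_iff) linarith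
  have gfr: "g s = g (fr s)" for s
    using per_int[of g, OF gper, of "fr s" "\<lfloor>s\<rfloor>"] by (simp add: fr_def)
  have hfr: "h s = h (fr s)" for s
    using per_int[of h, OF hper, of "fr s" "\<lfloor>s\<rfloor>"] by (simp add: fr_def)
  have g'per: "g' (t + real_of_int m) = g' t" for t m
    using per_int[of g', OF deriv_per[OF gper gder]] .
  have hcont: "continuous_on UNIV h"
    using hder by (meson continuous_at_imp_continuous_on has_vector_derivative_continuous)
  have gcont: "continuous_on UNIV g"
    using gder by (meson continuous_at_imp_continuous_on has_vector_derivative_continuous)
  have ph: "path h" using continuous_on_subset[OF hcont] by (simp add: path_def)
  have loop: "pathfinish h = pathstart h" using hper[of 0] by (simp add: pathfinish_def pathstart_def)
  have pimg: "path_image h = range h" using per_image[of h, OF hper, of 0] by (simp add: path_image_def)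
  define P where "P = (\<lambda>s. g s \<in> range h)"
  define F where "F = (\<lambda>s. winding_number h (g s))"
  define J where "J = (\<lambda>s. complex_of_real (sgn (cr (h' (\<tau> (fr s))) (g' s))))"
  have Pchar: "P s \<longleftrightarrow> fr s \<in> X" for s
  proof
    assume "P s"
    then obtain t where "g s = h t" by (auto simp: P_def)
    then have "g (fr s) = h (fr t)" using gfr hfr by simp
    then show "fr s \<in> X" using char fr01 by blast
  next
    assume a: "fr s \<in> X"
    then have "g (fr s) = h (\<tau> (fr s))" using char[of "fr s" "\<tau> (fr s)"] \<tau> fr01 by blast
    then show "P s" using gfr by (simp add: P_def)
  qed
  have fin: "finite {s\<in>{a..b}. P s}" for a b
  proof -
    have "{s\<in>{a..b}. P s} \<subseteq> (\<lambda>(x, m). x + real_of_int m) ` (X \<times> {\<lfloor>a\<rfloor>..\<lfloor>b\<rfloor>})"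
    proof
      fix s assume s: "s \<in> {s\<in>{a..b}. P s}"
      then have "fr s \<in> X" using Pchar by simp
      moreover have "\<lfloor>s\<rfloor> \<in> {\<lfloor>a\<rfloor>..\<lfloor>b\<rfloor>}" using s by (auto intro: floor_mono)
      moreover have "s = fr s + real_of_int \<lfloor>s\<rfloor>" by (simp add: fr_def)
      ultimately show "s \<in> (\<lambda>(x, m). x + real_of_int m) ` (X \<times> {\<lfloor>a\<rfloor>..\<lfloor>b\<rfloor>})"
        by (auto intro!: image_eqI[of _ _ "(fr s, \<lfloor>s\<rfloor>)"])
    qed
    moreover have "finite ((\<lambda>(x, m). x + real_of_int m) ` (X \<times> {\<lfloor>a\<rfloor>..\<lfloor>b\<rfloor>}))"
      using X by simp
    ultimately show ?thesis by (rule finite_subset)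
  qed
  have LC: "\<exists>d>0. \<forall>u. \<bar>u - y\<bar> < d \<longrightarrow> \<not> P u \<and> F u = F y" if nP: "\<not> P y" for y
  proof -
    have "compact (range h)" using compact_continuous_image[OF continuous_on_subset[OF hcont] compact_Icc, of 0 1]
      per_image[of h, OF hper, of 0] by simp
    then have "open (- range h)" by (simp add: compact_imp_closed open_Compl)
    moreover have "g y \<in> - range h" using nP by (simp add: P_def)
    ultimately obtain r where r: "r > 0" "ball (g y) r \<subseteq> - range h"
      using open_contains_ball by blast
    have "isCont g y" using gcont by (simp add: continuous_on_eq_continuous_at)
    then obtain d1 where d1: "d1 > 0" "\<And>u. dist u y < d1 \<Longrightarrow> dist (g u) (g y) < r"
      using r(1) unfolding continuous_at_eps_delta by blast
    have "isCont (winding_number h) (g y)"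
      by (rule continuous_at_winding_number[OF ph]) (use nP pimg in \<open>simp add: P_def\<close>)
    then have "isCont F y" unfolding F_def using \<open>isCont g y\<close> by (rule isCont_o2[rotated])
    then obtain d2 where d2: "d2 > 0" "\<And>u. dist u y < d2 \<Longrightarrow> dist (F u) (F y) < 1"
      unfolding continuous_at_eps_delta by (meson zero_less_one)
    show ?thesis
    proof (intro exI[of _ "min d1 d2"] conjI allI impI)
      show "min d1 d2 > 0" using d1 d2 by simp
      fix u assume u: "\<bar>u - y\<bar> < min d1 d2"
      have "dist (g u) (g y) < r" using d1(2)[of u] u by (simp add: dist_real_def)
      then have gu: "g u \<notin> range h" using r(2) by (auto simp: dist_commute)
      then show "\<not> P u" by (simp add: P_def)
      have i1: "F u \<in> \<int>" unfolding F_def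
        by (rule integer_winding_number[OF ph loop]) (use gu pimg in simp)
      have i2: "F y \<in> \<int>" unfolding F_def
        by (rule integer_winding_number[OF ph loop]) (use nP pimg in \<open>simp add: P_def\<close>)
      have "dist (F u) (F y) < 1" using d2(2)[of u] u by (simp add: dist_real_def)
      then show "F u = F y" using ints_close_eq[OF i1 i2] by (simp add: dist_norm)
    qed
  qed
  have JP: "\<exists>\<epsilon>. 0 < \<epsilon> \<and> \<epsilon> < e \<and> \<not> P (s0 + \<epsilon>) \<and> \<not> P (s0 - \<epsilon>) \<and> F (s0 + \<epsilon>) - F (s0 - \<epsilon>) = J s0"
    if Ps: "P s0" and e: "e > 0" for s0 e
  proof -
    define x0 where "x0 = fr s0"
    have x0X: "x0 \<in> X" using Ps Pchar by (simp add: x0_def)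
    define t0 where "t0 = \<tau> x0"
    have t0: "t0 \<in> {0..<1}" using \<tau> x0X by (simp add: t0_def)
    have gx0: "g x0 = h t0" using char[of x0 t0] x0X t0 X(2) by (auto simp: t0_def)
    have cross: "g s0 = h t0" using gfr gx0 by (simp add: x0_def)
    have uniq: "t - t0 \<in> \<int>" if "h t = h t0" for t
    proof -
      have "g x0 = h (fr t)" using that hfr gx0 by simp
      then have "fr t = t0" using char[of x0 "fr t"] X(2) x0X fr01 by (auto simp: t0_def)
      then have "t - t0 = real_of_int \<lfloor>t\<rfloor>" by (simp add: fr_def)
      then show ?thesis by simp
    qed
    have gs0: "g' s0 = g' x0" using g'per[of x0 "\<lfloor>s0\<rfloor>"] by (simp add: x0_def fr_def)
    have c0: "cr (h' t0) (g' s0) \<noteq> 0" using trans[OF x0X] gs0 by (simp add: t0_def)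
    obtain \<epsilon> where \<epsilon>: "0 < \<epsilon>" "\<epsilon> < e" "g (s0 + \<epsilon>) \<notin> range h" "g (s0 - \<epsilon>) \<notin> range h"
      "winding_number h (g (s0 + \<epsilon>)) - winding_number h (g (s0 - \<epsilon>)) = complex_of_real (sgn (cr (h' t0) (g' s0)))"
      using jump[OF hper hder hc gder[of s0] cross uniq c0 e] by blast
    show ?thesis
      using \<epsilon> by (intro exI[of _ \<epsilon>]) (simp add: P_def F_def J_def t0_def x0_def)
  qed
  define M where "M = Max X"
  have M: "M < 1" "\<And>x. x \<in> X \<Longrightarrow> x \<le> M" using X False by (auto simp: M_def)
  define \<eta> where "\<eta> = (1 - M) / 2"
  have M0: "M \<ge> 0" using Max_in[OF X(1) False] X(2) by (auto simp: M_def)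
  have \<eta>: "0 < \<eta>" "\<eta> < 1" "M < 1 - \<eta>" using M(1) M0 by (simp_all add: \<eta>_def field_simps)
  have fr1: "fr (1 - \<eta>) = 1 - \<eta>" using \<eta> by (simp add: fr_def floor_eq_iff)
  have fr2: "fr (-\<eta>) = 1 - \<eta>"
  proof -
    have "\<lfloor>-\<eta>\<rfloor> = -1" using \<eta> by (simp add: floor_eq_iff)
    then show ?thesis by (simp add: fr_def)
  qed
  have notX: "1 - \<eta> \<notin> X" using M(2) \<eta> by force
  have nPa: "\<not> P (-\<eta>)" and nPb: "\<not> P (1 - \<eta>)" using Pchar fr1 fr2 notX by auto
  have SX: "{s\<in>{-\<eta>..1 - \<eta>}. P s} = X"
  proof
    show "{s\<in>{-\<eta>..1 - \<eta>}. P s} \<subseteq> X"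
    proof
      fix s assume s: "s \<in> {s\<in>{-\<eta>..1 - \<eta>}. P s}"
      then have fs: "fr s \<in> X" using Pchar by simp
      show "s \<in> X"
      proof (cases "s < 0")
        case True
        then have "\<lfloor>s\<rfloor> = -1" using s \<eta> by (simp add: floor_eq_iff)
        then have "fr s = s + 1" by (simp add: fr_def)
        then have "fr s \<ge> 1 - \<eta>" using s by simp
        then show ?thesis using M(2)[OF fs] \<eta> by simp
      next
        case False
        then have "\<lfloor>s\<rfloor> = 0" using s \<eta> by (simp add: floor_eq_iff)
        then show ?thesis using fs by (simp add: fr_def)
      qed
    qed
    show "X \<subseteq> {s\<in>{-\<eta>..1 - \<eta>}. P s}"
    proof
      fix s assume s: "s \<in> X"
      then have "s \<in> {0..<1}" using X by auto
      then have "fr s = s" by (simp add: fr_def floor_eq_iff)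
      then show "s \<in> {s\<in>{-\<eta>..1 - \<eta>}. P s}" using s M(2)[OF s] \<eta> Pchar \<open>s \<in> {0..<1}\<close> by auto
    qed
  qed
  have "F (1 - \<eta>) - F (-\<eta>) = (\<Sum>s\<in>{s\<in>{-\<eta>..1 - \<eta>}. P s}. J s)"
    by (rule sum_jumps[where P=P and F=F and J=J, OF LC fin JP]) (use \<eta> nPa nPb in auto)
  moreover have "F (1 - \<eta>) = F (-\<eta>)" using gper[of "-\<eta>"] by (simp add: F_def)
  ultimately have "(\<Sum>s\<in>X. J s) = 0" using SX by simp
  moreover have "(\<Sum>s\<in>X. J s) = complex_of_real (\<Sum>s\<in>X. sgn (cr (h' (\<tau> s)) (g' s)))"
  proof -
    have "\<And>s. s \<in> X \<Longrightarrow> fr s = s" using X by (auto simp: fr_def floor_eq_iff)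
    then show ?thesis by (simp add: J_def)
  qed
  ultimately show ?thesis by (metis of_real_eq_0_iff)
qed

lemma sorted_less_distinct: "sorted_wrt (<) (xs :: real list) \<Longrightarrow> distinct xs"
  by (induction xs) auto

lemma planar_sym:
  assumes pl: "planar_gd D" and jk: "j < length (fst D)" "k < length (fst D)" "j \<noteq> k"
  shows "forbidden_matrix D j k = forbidden_matrix D k j"
proof -
  let ?n = "length (fst D)"
  let ?ws = "fst D"
  have wf: "wf_gd D" using pl by (simp add: planar_gd_def)
  have dist: "distinct (concat ?ws)" using wf by (simp add: wf_gd_def)
  have "\<exists>(\<gamma> :: nat \<Rightarrow> real \<Rightarrow> complex) \<gamma>' (pos :: endpt \<Rightarrow> real).
       (\<forall>j < length (fst D).
          (\<forall>t. (\<gamma> j has_vector_derivative \<gamma>' j t) (at t) \<and> \<gamma>' j t \<noteq> 0 \<and> \<gamma> j (t + 1) = \<gamma> j t) \<and>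
          continuous_on UNIV (\<gamma>' j) \<and>
          sorted_wrt (<) (map pos (fst D ! j)) \<and>
          (\<forall>e\<in>set (fst D ! j). 0 \<le> pos e \<and> pos e < 1)) \<and>
       (\<forall>a\<in>gd_arrows D.
          \<gamma> (circ D (Tl a)) (pos (Tl a)) = \<gamma> (circ D (Hd a)) (pos (Hd a)) \<and>
          of_int (snd D a) =
            sgn (Im (cnj (\<gamma>' (circ D (Tl a)) (pos (Tl a))) * \<gamma>' (circ D (Hd a)) (pos (Hd a))))) \<and>
       (\<forall>j < length (fst D). \<forall>k < length (fst D). \<forall>s\<in>{0..<1}. \<forall>t\<in>{0..<1}.
          \<gamma> j s = \<gamma> k t \<and> (j, s) \<noteq> (k, t) \<longrightarrow>
          (\<exists>a\<in>gd_arrows D.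
             ((j, s) = (circ D (Tl a), pos (Tl a)) \<and> (k, t) = (circ D (Hd a), pos (Hd a))) \<or>
             ((k, t) = (circ D (Tl a), pos (Tl a)) \<and> (j, s) = (circ D (Hd a), pos (Hd a)))))"
    using pl unfolding planar_gd_def by (rule conjunct2)
  then obtain \<gamma> :: "nat \<Rightarrow> real \<Rightarrow> complex" and \<gamma>' and pos :: "endpt \<Rightarrow> real" where
    P1: "\<forall>j < length (fst D).
          (\<forall>t. (\<gamma> j has_vector_derivative \<gamma>' j t) (at t) \<and> \<gamma>' j t \<noteq> 0 \<and> \<gamma> j (t + 1) = \<gamma> j t) \<and>
          continuous_on UNIV (\<gamma>' j) \<and>
          sorted_wrt (<) (map pos (fst D ! j)) \<and>
          (\<forall>e\<in>set (fst D ! j). 0 \<le> pos e \<and> pos e < 1)"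
    and P2: "\<forall>a\<in>gd_arrows D.
          \<gamma> (circ D (Tl a)) (pos (Tl a)) = \<gamma> (circ D (Hd a)) (pos (Hd a)) \<and>
          of_int (snd D a) =
            sgn (Im (cnj (\<gamma>' (circ D (Tl a)) (pos (Tl a))) * \<gamma>' (circ D (Hd a)) (pos (Hd a))))"
    and P3: "\<forall>j < length (fst D). \<forall>k < length (fst D). \<forall>s\<in>{0..<1}. \<forall>t\<in>{0..<1}.
          \<gamma> j s = \<gamma> k t \<and> (j, s) \<noteq> (k, t) \<longrightarrow>
          (\<exists>a\<in>gd_arrows D.
             ((j, s) = (circ D (Tl a), pos (Tl a)) \<and> (k, t) = (circ D (Hd a), pos (Hd a))) \<or>
             ((k, t) = (circ D (Tl a), pos (Tl a)) \<and> (j, s) = (circ D (Hd a), pos (Hd a))))"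
    by blast
  have wf2: "\<And>a. (\<exists>w\<in>set ?ws. Tl a \<in> set w) \<longleftrightarrow> (\<exists>w\<in>set ?ws. Hd a \<in> set w)"
    using wf unfolding wf_gd_def by blast
  have wf3: "\<And>a. a \<in> gd_arrows D \<Longrightarrow> snd D a = 1 \<or> snd D a = -1"
    using wf unfolding wf_gd_def by (metis (no_types, lifting))
  have ep_gen: "circ D e < ?n \<and> e \<in> set (?ws ! circ D e)" if "\<exists>w\<in>set ?ws. e \<in> set w" for e
  proof -
    from that obtain w where w: "w \<in> set ?ws" "e \<in> set w" by blast
    from w(1) obtain i where "i < ?n" "?ws ! i = w" by (meson in_set_conv_nth)
    then have i: "i < ?n" "e \<in> set (?ws ! i)" using w(2) by simp_all
    then show ?thesis using circ_eq[OF dist i] by simp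
  qed
  have epT: "circ D (Tl a) < ?n \<and> Tl a \<in> set (?ws ! circ D (Tl a))" if "a \<in> gd_arrows D" for a
    using that wf2[of a] ep_gen unfolding gd_arrows_def by blast
  have epH: "circ D (Hd a) < ?n \<and> Hd a \<in> set (?ws ! circ D (Hd a))" if "a \<in> gd_arrows D" for a
    using that wf2[of a] ep_gen unfolding gd_arrows_def by blast
  have pinj: "e = e'" if "i < ?n" "e \<in> set (?ws ! i)" "e' \<in> set (?ws ! i)" "pos e = pos e'" for i e e'
  proof -
    have "distinct (map pos (?ws ! i))" using P1 that(1) sorted_less_distinct by blast
    then have "inj_on pos (set (?ws ! i))" by (simp add: distinct_map)
    then show ?thesis using that by (meson inj_onD)
  qed
  have posb: "0 \<le> pos e \<and> pos e < 1" if "i < ?n" "e \<in> set (?ws ! i)" for i e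
    using P1 that by blast
  have key: "a = b" if ab: "a \<in> gd_arrows D" "b \<in> gd_arrows D" and e: "e \<in> {Tl a, Hd a}" and e': "e' \<in> {Tl b, Hd b}"
    and c: "circ D e = circ D e'" and p: "pos e = pos e'" for a b e e'
  proof -
    have "circ D e < ?n \<and> e \<in> set (?ws ! circ D e)" using e epT[OF ab(1)] epH[OF ab(1)] by auto
    moreover have "e' \<in> set (?ws ! circ D e)" using e' epT[OF ab(2)] epH[OF ab(2)] c by auto
    ultimately have "e = e'" using pinj p by blast
    then have "arrow_of e = arrow_of e'" by simp
    then show ?thesis using e e' by auto
  qed
  define d1 where "d1 = (\<lambda>a. (circ D (Tl a), pos (Tl a)))"
  define d2 where "d2 = (\<lambda>a. (circ D (Hd a), pos (Hd a)))"
  have same: "a = b" if ab: "a \<in> gd_arrows D" "b \<in> gd_arrows D" and q: "q \<in> {d1 a, d2 a}" "q \<in> {d1 b, d2 b}" for a b q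
  proof -
    obtain e where e: "e \<in> {Tl a, Hd a}" "q = (circ D e, pos e)" using q(1) by (auto simp: d1_def d2_def)
    obtain e' where e': "e' \<in> {Tl b, Hd b}" "q = (circ D e', pos e')" using q(2) by (auto simp: d1_def d2_def)
    show ?thesis using key[OF ab e(1) e'(1)] e(2) e'(2) by simp
  qed
  have coinc: "\<exists>a\<in>gd_arrows D. {d1 a, d2 a} = {(i, x), (i', x')}"
    if hyp: "i < ?n" "i' < ?n" "x \<in> {0..<1}" "x' \<in> {0..<1}" "\<gamma> i x = \<gamma> i' x'" "(i, x) \<noteq> (i', x')" for i i' x x'
  proof -
    obtain a where a: "a \<in> gd_arrows D"
      "((i, x) = (circ D (Tl a), pos (Tl a)) \<and> (i', x') = (circ D (Hd a), pos (Hd a))) \<or>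
       ((i', x') = (circ D (Tl a), pos (Tl a)) \<and> (i, x) = (circ D (Hd a), pos (Hd a)))"
      using P3 hyp by blast
    then show ?thesis by (auto simp: d1_def d2_def)
  qed
  have U: "t = t'" if hU: "s \<in> {0..<1}" "t \<in> {0..<1}" "t' \<in> {0..<1}" "\<gamma> j s = \<gamma> k t" "\<gamma> j s = \<gamma> k t'" for s t t'
  proof (rule ccontr)
    assume ne: "t \<noteq> t'"
    obtain a1 where a1: "a1 \<in> gd_arrows D" "{d1 a1, d2 a1} = {(j, s), (k, t)}"
      using coinc[of j k s t] hU jk by auto
    obtain a2 where a2: "a2 \<in> gd_arrows D" "{d1 a2, d2 a2} = {(k, t), (k, t')}"
      using coinc[of k k t t'] hU jk ne by auto
    have "a1 = a2" using same[OF a1(1) a2(1), of "(k, t)"] a1(2) a2(2) by auto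
    then have "(j, s) \<in> {(k, t), (k, t')}" using a1(2) a2(2) by auto
    then show False using jk(3) by auto
  qed
  define A1 where "A1 = {a\<in>gd_arrows D. circ D (Tl a) = j \<and> circ D (Hd a) = k}"
  define A2 where "A2 = {a\<in>gd_arrows D. circ D (Tl a) = k \<and> circ D (Hd a) = j}"
  define X where "X = (\<lambda>a. pos (Tl a)) ` A1 \<union> (\<lambda>a. pos (Hd a)) ` A2"
  define \<tau> where "\<tau> = (\<lambda>s. SOME t. t \<in> {0..<1} \<and> \<gamma> j s = \<gamma> k t)"
  have posT: "pos (Tl a) \<in> {0..<1}" and posH: "pos (Hd a) \<in> {0..<1}" if "a \<in> gd_arrows D" for a
    using posb epT[OF that] epH[OF that] by auto
  have tauI: "\<tau> s = t" if "s \<in> {0..<1}" "t \<in> {0..<1}" "\<gamma> j s = \<gamma> k t" for s t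
    unfolding \<tau>_def
  proof (rule some_equality)
    show "t \<in> {0..<1} \<and> \<gamma> j s = \<gamma> k t" using that by simp
    show "\<And>t'. t' \<in> {0..<1} \<and> \<gamma> j s = \<gamma> k t' \<Longrightarrow> t' = t" using U that by metis
  qed
  have A1g: "\<gamma> j (pos (Tl a)) = \<gamma> k (pos (Hd a))" if "a \<in> A1" for a
    using P2 that by (auto simp: A1_def)
  have A2g: "\<gamma> j (pos (Hd a)) = \<gamma> k (pos (Tl a))" if "a \<in> A2" for a
    using P2 that by (auto simp: A2_def)
  have tA1: "\<tau> (pos (Tl a)) = pos (Hd a)" if "a \<in> A1" for a
    using tauI A1g[OF that] posT posH that by (auto simp: A1_def)
  have tA2: "\<tau> (pos (Hd a)) = pos (Tl a)" if "a \<in> A2" for a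
    using tauI A2g[OF that] posT posH that by (auto simp: A2_def)
  have char: "\<gamma> j s = \<gamma> k t \<longleftrightarrow> (s \<in> X \<and> t = \<tau> s)" if st: "s \<in> {0..<1}" "t \<in> {0..<1}" for s t
  proof
    assume eq: "\<gamma> j s = \<gamma> k t"
    obtain a where a: "a \<in> gd_arrows D" "{d1 a, d2 a} = {(j, s), (k, t)}"
      using coinc[of j k s t] st jk eq by auto
    then have "(d1 a = (j, s) \<and> d2 a = (k, t)) \<or> (d1 a = (k, t) \<and> d2 a = (j, s))"
      by (simp add: doubleton_eq_iff)
    then show "s \<in> X \<and> t = \<tau> s"
    proof
      assume h: "d1 a = (j, s) \<and> d2 a = (k, t)"
      then have aA: "a \<in> A1" using a(1) by (simp add: A1_def d1_def d2_def)
      then show ?thesis using h tA1[OF aA] by (auto simp: X_def d1_def d2_def)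
    next
      assume h: "d1 a = (k, t) \<and> d2 a = (j, s)"
      then have aA: "a \<in> A2" using a(1) by (simp add: A2_def d1_def d2_def)
      then show ?thesis using h tA2[OF aA] by (auto simp: X_def d1_def d2_def)
    qed
  next
    assume h: "s \<in> X \<and> t = \<tau> s"
    then show "\<gamma> j s = \<gamma> k t" using tA1 tA2 A1g A2g unfolding X_def by auto
  qed
  have finA: "finite A1" "finite A2" using finite_gd_arrows by (simp_all add: A1_def A2_def)
  have Xfin: "finite X" using finA by (simp add: X_def)
  have Xsub: "X \<subseteq> {0..<1}" using posT posH by (auto simp: X_def A1_def A2_def)
  have tau01: "\<tau> s \<in> {0..<1}" if "s \<in> X" for s
    using that tA1 tA2 posT posH by (auto simp: X_def A1_def A2_def)
  define Sg where "Sg = (\<lambda>s. sgn (cr (\<gamma>' k (\<tau> s)) (\<gamma>' j s)))"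
  have SgA1: "Sg (pos (Tl a)) = - real_of_int (snd D a)" if "a \<in> A1" for a
  proof -
    have "real_of_int (snd D a) = sgn (cr (\<gamma>' j (pos (Tl a))) (\<gamma>' k (pos (Hd a))))"
      using P2 that by (auto simp: A1_def cr_def)
    then show ?thesis using tA1[OF that] by (simp add: Sg_def cr_swap[of "\<gamma>' j (pos (Tl a))"] sgn_minus)
  qed
  have SgA2: "Sg (pos (Hd a)) = real_of_int (snd D a)" if "a \<in> A2" for a
  proof -
    have "real_of_int (snd D a) = sgn (cr (\<gamma>' k (pos (Tl a))) (\<gamma>' j (pos (Hd a))))"
      using P2 that by (auto simp: A2_def cr_def)
    then show ?thesis using tA2[OF that] by (simp add: Sg_def)
  qed
  have trans: "cr (\<gamma>' k (\<tau> s)) (\<gamma>' j s) \<noteq> 0" if "s \<in> X" for s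
  proof -
    have "Sg s \<noteq> 0"
    proof -
      from that consider a where "a \<in> A1" "s = pos (Tl a)" | a where "a \<in> A2" "s = pos (Hd a)"
        unfolding X_def by blast
      then show ?thesis
      proof cases
        case 1
        then have "snd D a = 1 \<or> snd D a = -1" using wf3 by (simp add: A1_def)
        then show ?thesis using SgA1[OF 1(1)] 1(2) by auto
      next
        case 2
        then have "snd D a = 1 \<or> snd D a = -1" using wf3 by (simp add: A2_def)
        then show ?thesis using SgA2[OF 2(1)] 2(2) by auto
      qed
    qed
    then show ?thesis by (auto simp: Sg_def)
  qed
  have inj1: "inj_on (\<lambda>a. pos (Tl a)) A1"
  proof (rule inj_onI)
    fix a b assume "a \<in> A1" "b \<in> A1" "pos (Tl a) = pos (Tl b)"
    then show "a = b" using key[of a b "Tl a" "Tl b"] by (auto simp: A1_def)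
  qed
  have inj2: "inj_on (\<lambda>a. pos (Hd a)) A2"
  proof (rule inj_onI)
    fix a b assume "a \<in> A2" "b \<in> A2" "pos (Hd a) = pos (Hd b)"
    then show "a = b" using key[of a b "Hd a" "Hd b"] by (auto simp: A2_def)
  qed
  have disj: "(\<lambda>a. pos (Tl a)) ` A1 \<inter> (\<lambda>a. pos (Hd a)) ` A2 = {}"
  proof (rule ccontr)
    assume "(\<lambda>a. pos (Tl a)) ` A1 \<inter> (\<lambda>a. pos (Hd a)) ` A2 \<noteq> {}"
    then obtain a b where ab: "a \<in> A1" "b \<in> A2" "pos (Tl a) = pos (Hd b)" by auto
    have m: "a \<in> gd_arrows D" "b \<in> gd_arrows D" "circ D (Tl a) = circ D (Hd b)"
      "circ D (Tl a) = j" "circ D (Tl b) = k"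
      using ab by (simp_all add: A1_def A2_def)
    have "a = b" using key[OF m(1,2) _ _ m(3) ab(3)] by simp
    then show False using m(4,5) jk(3) by simp
  qed
  have "(\<Sum>s\<in>X. Sg s) = 0"
    unfolding Sg_def
    by (rule intersection_zero[of "\<gamma> j" "\<gamma> k" "\<gamma>' j" "\<gamma>' k" X \<tau>])
       (use P1 jk Xfin Xsub char tau01 trans in auto)
  moreover have "(\<Sum>s\<in>X. Sg s) = (\<Sum>a\<in>A1. Sg (pos (Tl a))) + (\<Sum>a\<in>A2. Sg (pos (Hd a)))"
    unfolding X_def using finA disj inj1 inj2
    by (simp add: sum.union_disjoint sum.reindex)
  moreover have "(\<Sum>a\<in>A1. Sg (pos (Tl a))) = - real_of_int (forbidden_matrix D j k)"
    unfolding forbidden_matrix_def A1_def[symmetric] using SgA1 by (simp add: sum_negf)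
  moreover have "(\<Sum>a\<in>A2. Sg (pos (Hd a))) = real_of_int (forbidden_matrix D k j)"
    unfolding forbidden_matrix_def A2_def[symmetric] using SgA2 by simp
  ultimately show ?thesis by linarith
qed

theorem mainTheorem3:
  fixes D D' :: gd
  assumes "planar_gd D"
    and "gd_equiv D D'"
    and "reduced_gd D'"
  shows "\<forall>j < length (fst D'). \<forall>k < length (fst D').
           forbidden_matrix D' j k = forbidden_matrix D' k j"
proof (intro allI impI)
  fix j k assume jk: "j < length (fst D')" "k < length (fst D')"
  have E: "length (fst D') = length (fst D)"
    "\<And>j k. j \<noteq> k \<Longrightarrow> forbidden_matrix D' j k = forbidden_matrix D j k"
    using equiv_FM[OF assms(2)] by auto
  show "forbidden_matrix D' j k = forbidden_matrix D' k j"
  proof (cases "j = k")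
    case True then show ?thesis by simp
  next
    case False
    then show ?thesis using E planar_sym[OF assms(1)] jk by (metis)
  qed
qed

end
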